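(* Let $\mathfrak g$ be a finite-dimensional Lie algebra over a field $\mathbb K$ of characteristic zero, let $V=(V^\bullet,d^V)$ be a non-negative bounded dg $\mathfrak g$-module, and let $u=\min\{\mathrm{top}(V),\dim\mathfrak g\}$. Given a family of linear maps $\{\alpha_k\colon V^k\otimes\wedge^k\mathfrak g\to\mathfrak g\}_{0\le k\le u}$ (with $\alpha_k:=0$ for $k>u$), the corresponding degree $0$, $\Omega_{\mathfrak g}$-linear map $\alpha\colon\Omega_{\mathfrak g}(V)\to\Omega_{\mathfrak g}(\mathfrak g)$ defines a dg Loday–Pirashvili module $(V,\alpha)$ if and only if for all $0\le k\le u$, all $x_1,\dots,x_{k+1}\in\mathfrak g$ and all $v\in V^k$: \begin{align*} \alpha_{k+1}\big(d^V_kv\mid x_1,\dots,x_{k+1}\big)&=\sum_{i=1}^{k+1}(-1)^{i+1}\Big([x_i,\alpha_k(v\mid x_1,\dots,\widehat{x_i},\dots,x_{k+1})]-\alpha_k(x_i\triangleright v\mid x_1,\dots,\widehat{x_i},\dots,x_{k+1})\Big)\\ &\quad+\sum_{i<j}(-1)^{i+j}\alpha_k\big(v\mid[x_i,x_j],x_1,\dots,\widehat{x_i},\dots,\widehat{x_j},\dots,x_{k+1}\big). \end{align*}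
   Context: A dg $\mathfrak g$-module is a bounded cochain complex $(V^\bullet,d^V)$ of $\mathfrak g$-modules with $\mathfrak g$-equivariant differentials; non-negative means $V^i=0$ for $i<0$, and $\mathrm{top}(V)$ is the highest degree with $V^i\neq0$. $\Omega_{\mathfrak g}=\wedge^\bullet\mathfrak g^\vee$; $\Omega_{\mathfrak g}(V)=\wedge^\bullet\mathfrak g^\vee\otimes V$ graded by $p+q$ on $\wedge^p\mathfrak g^\vee\otimes V^q$, with total differential $d^V_{\mathrm{tot}}=d^V_{\mathrm{CE}}+d^V$ ($d^V_{\mathrm{CE}}$ the Chevalley–Eilenberg differential of the $\mathfrak g$-module $\oplus_iV^i$, $d^V(\omega\otimes v)=(-1)^p\omega\otimes d^Vv$ for $\omega\in\wedge^p\mathfrak g^\vee$). $\mathfrak g$ is regarded as a dg $\mathfrak g$-module concentrated in degree $0$ with the adjoint action, so $\Omega_{\mathfrak g}(\mathfrak g)$ has differential $d^{\mathfrak g}_{\mathrm{CE}}$. Each $\alpha_k$ is viewed as a map $V^k\to\wedge^k\mathfrak g^\vee\otimes\mathfrak g$, and $\alpha$ is defined by $\alpha(\omega\otimes v)=\omega\wedge\alpha_k(v)$ for $v\in V^k$. A dg Loday–Pirashvili module over $\mathfrak g$ is a pair $(V,\alpha)$ with $V$ a non-negative bounded dg $\mathfrak g$-module and $\alpha\colon\Omega_{\mathfrak g}(V)\to\Omega_{\mathfrak g}(\mathfrak g)$ a degree $0$ $\Omega_{\mathfrak g}$-linear map with $\alpha\circ d^V_{\mathrm{tot}}=d^{\mathfrak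 g}_{\mathrm{CE}}\circ\alpha$. *)

theory Defs
  imports Complex_Main
begin

definition sgn_pow :: "nat \<Rightarrow> 'w::ab_group_add \<Rightarrow> 'w" where
  "sgn_pow n x = (if even n then x else - x)"

(* remove the i-th entry (0-based) of a list: the hat notation *)
definition del_nth :: "nat \<Rightarrow> 'a list \<Rightarrow> 'a list" where
  "del_nth i xs = take i xs @ drop (Suc i) xs"

definition lie_algebra :: "('k::field \<Rightarrow> 'g::ab_group_add \<Rightarrow> 'g) \<Rightarrow> ('g \<Rightarrow> 'g \<Rightarrow> 'g) \<Rightarrow> bool" where
  "lie_algebra sc br \<longleftrightarrow> vector_space sc
     \<and> (\<forall>c x y z. br (sc c x + y) z = sc c (br x z) + br y z)
     \<and> (\<forall>c x y z. br x (sc c y + z) = sc c (br x y) + br x z)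
     \<and> (\<forall>x. br x x = 0)
     \<and> (\<forall>x y z. br x (br y z) + br y (br z x) + br z (br x y) = 0)"

definition finite_dim :: "('k::field \<Rightarrow> 'g::ab_group_add \<Rightarrow> 'g) \<Rightarrow> bool" where
  "finite_dim sc \<longleftrightarrow> (\<exists>B. finite B \<and> module.span sc B = UNIV)"

definition lie_module :: "('k::field \<Rightarrow> 'g::ab_group_add \<Rightarrow> 'g) \<Rightarrow> ('g \<Rightarrow> 'g \<Rightarrow> 'g)
    \<Rightarrow> ('k \<Rightarrow> 'v::ab_group_add \<Rightarrow> 'v) \<Rightarrow> 'v set \<Rightarrow> ('g \<Rightarrow> 'v \<Rightarrow> 'v) \<Rightarrow> bool" where
  "lie_module sc br scv W act \<longleftrightarrow> vector_space scv \<and> module.subspace scv W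
     \<and> (\<forall>x. \<forall>v\<in>W. act x v \<in> W)
     \<and> (\<forall>c x y. \<forall>v\<in>W. act (sc c x + y) v = scv c (act x v) + act y v)
     \<and> (\<forall>c x. \<forall>v\<in>W. \<forall>w\<in>W. act x (scv c v + w) = scv c (act x v) + act x w)
     \<and> (\<forall>x y. \<forall>v\<in>W. act (br x y) v = act x (act y v) - act y (act x v))"

(* Non-negative bounded dg g-module: V^q = V q (q :: nat, so V^i = 0 for i < 0),
   action act q on V^q, differential d q : V^q \<rightarrow> V^(q+1). *)
definition dg_module :: "('k::field \<Rightarrow> 'g::ab_group_add \<Rightarrow> 'g) \<Rightarrow> ('g \<Rightarrow> 'g \<Rightarrow> 'g)
    \<Rightarrow> ('k \<Rightarrow> 'v::ab_group_add \<Rightarrow> 'v) \<Rightarrow> (nat \<Rightarrow> 'v set) \<Rightarrow> (nat \<Rightarrow> 'g \<Rightarrow> 'v \<Rightarrow> 'v)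
    \<Rightarrow> (nat \<Rightarrow> 'v \<Rightarrow> 'v) \<Rightarrow> bool" where
  "dg_module sc br scv V act d \<longleftrightarrow>
     (\<forall>q. lie_module sc br scv (V q) (act q))
     \<and> (\<forall>q. \<forall>v\<in>V q. d q v \<in> V (Suc q))
     \<and> (\<forall>q c. \<forall>v\<in>V q. \<forall>w\<in>V q. d q (scv c v + w) = scv c (d q v) + d q w)
     \<and> (\<forall>q. \<forall>v\<in>V q. d (Suc q) (d q v) = 0)
     \<and> (\<forall>q x. \<forall>v\<in>V q. d q (act q x v) = act (Suc q) x (d q v))
     \<and> (\<exists>N. \<forall>i>N. V i = {0})"

definition topdeg :: "(nat \<Rightarrow> 'v::zero set) \<Rightarrow> nat" where
  "topdeg V = (GREATEST i. V i \<noteq> {0})"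

definition alt_map :: "('k::field \<Rightarrow> 'g::ab_group_add \<Rightarrow> 'g) \<Rightarrow> ('k \<Rightarrow> 'w::ab_group_add \<Rightarrow> 'w)
    \<Rightarrow> nat \<Rightarrow> ('g list \<Rightarrow> 'w) \<Rightarrow> bool" where
  "alt_map sc scw n f \<longleftrightarrow>
     (\<forall>xs i c y z. length xs = n \<longrightarrow> i < n \<longrightarrow>
         f (xs[i := sc c y + z]) = scw c (f (xs[i := y])) + f (xs[i := z]))
     \<and> (\<forall>xs i j. length xs = n \<longrightarrow> i < j \<longrightarrow> j < n \<longrightarrow> xs ! i = xs ! j \<longrightarrow> f xs = 0)"

(* Omega^p_g(W) = wedge^p g^\<or> \<otimes> W, modelled (g finite-dimensional) as alternating
   p-linear maps g^p \<rightarrow> W *)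
definition cochains :: "('k::field \<Rightarrow> 'g::ab_group_add \<Rightarrow> 'g) \<Rightarrow> ('k \<Rightarrow> 'w::ab_group_add \<Rightarrow> 'w)
    \<Rightarrow> nat \<Rightarrow> 'w set \<Rightarrow> ('g list \<Rightarrow> 'w) set" where
  "cochains sc scw p W = {f. alt_map sc scw p f \<and> (\<forall>xs. length xs = p \<longrightarrow> f xs \<in> W)}"

definition ce_diff :: "('g \<Rightarrow> 'g \<Rightarrow> 'g) \<Rightarrow> ('g \<Rightarrow> 'w \<Rightarrow> 'w) \<Rightarrow> ('g list \<Rightarrow> 'w::ab_group_add)
    \<Rightarrow> 'g list \<Rightarrow> 'w" where
  "ce_diff br rho eta xs =
     (\<Sum>i<length xs. sgn_pow i (rho (xs ! i) (eta (del_nth i xs))))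
     + (\<Sum>(i, j)\<in>{(i, j). i < j \<and> j < length xs}.
          sgn_pow (i + j) (eta (br (xs ! i) (xs ! j) # del_nth i (del_nth j xs))))"

definition lp_family :: "('k::field \<Rightarrow> 'g::ab_group_add \<Rightarrow> 'g) \<Rightarrow> ('k \<Rightarrow> 'v::ab_group_add \<Rightarrow> 'v)
    \<Rightarrow> (nat \<Rightarrow> 'v set) \<Rightarrow> nat \<Rightarrow> (nat \<Rightarrow> 'v \<Rightarrow> 'g list \<Rightarrow> 'g) \<Rightarrow> bool" where
  "lp_family sc scv V u alpha \<longleftrightarrow>
     (\<forall>k\<le>u. \<forall>xs c. length xs = k \<longrightarrow> (\<forall>v\<in>V k. \<forall>w\<in>V k.
         alpha k (scv c v + w) xs = sc c (alpha k v xs) + alpha k w xs))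
     \<and> (\<forall>k\<le>u. \<forall>v\<in>V k. alt_map sc sc k (alpha k v))
     \<and> (\<forall>k>u. \<forall>v xs. alpha k v xs = 0)"

(* The induced map alpha : Omega^p_g(V^q) \<rightarrow> Omega^(p+q)_g(g),
   alpha(omega \<otimes> v) = omega \<and> alpha_q(v), written out via (p,q)-shuffles:
   a subset S of {0..<p+q} of size p, sign (-1)^(sum S - p(p-1)/2). *)
definition lp_ext :: "(nat \<Rightarrow> 'v \<Rightarrow> 'g list \<Rightarrow> 'g::ab_group_add) \<Rightarrow> nat \<Rightarrow> nat
    \<Rightarrow> ('g list \<Rightarrow> 'v) \<Rightarrow> 'g list \<Rightarrow> 'g" where
  "lp_ext alpha p q eta xs =
     (\<Sum>S\<in>{S. S \<subseteq> {..<p + q} \<and> card S = p}.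
        sgn_pow (\<Sum>S + p * (p - 1) div 2)
          (alpha q (eta (nths xs S)) (nths xs ({..<p + q} - S))))"

(* (V, alpha) is a dg Loday-Pirashvili module: alpha \<circ> d_tot = d_CE \<circ> alpha on each
   homogeneous component Omega^p_g(V^q), where d_tot = d_CE^V + (-1)^p d^V *)
definition dg_LP_module :: "('k::field \<Rightarrow> 'g::ab_group_add \<Rightarrow> 'g) \<Rightarrow> ('g \<Rightarrow> 'g \<Rightarrow> 'g)
    \<Rightarrow> ('k \<Rightarrow> 'v::ab_group_add \<Rightarrow> 'v) \<Rightarrow> (nat \<Rightarrow> 'v set) \<Rightarrow> (nat \<Rightarrow> 'g \<Rightarrow> 'v \<Rightarrow> 'v)
    \<Rightarrow> (nat \<Rightarrow> 'v \<Rightarrow> 'v) \<Rightarrow> (nat \<Rightarrow> 'v \<Rightarrow> 'g list \<Rightarrow> 'g) \<Rightarrow> bool" where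
  "dg_LP_module sc br scv V act d alpha \<longleftrightarrow> dg_module sc br scv V act d \<and>
     (\<forall>p q. \<forall>eta\<in>cochains sc scv p (V q). \<forall>xs. length xs = p + q + 1 \<longrightarrow>
        lp_ext alpha (Suc p) q (ce_diff br (act q) eta) xs
          + sgn_pow p (lp_ext alpha p (Suc q) (\<lambda>ys. d q (eta ys)) xs)
        = ce_diff br br (lp_ext alpha p q eta) xs)"

end

theory Submission
  imports Defs
begin

definition rk :: "nat set \<Rightarrow> nat \<Rightarrow> nat" where
  "rk A i = card {k\<in>A. k < i}"

definition Sub :: "nat set \<Rightarrow> nat \<Rightarrow> nat set set" where
  "Sub A p = {S. S \<subseteq> A \<and> card S = p}"

lemma finite_Sub[simp]: "finite A \<Longrightarrow> finite (Sub A p)"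
  unfolding Sub_def by (rule finite_subset[of _ "Pow A"]) auto

lemma Sub_finite: "finite A \<Longrightarrow> S \<in> Sub A p \<Longrightarrow> finite S"
  unfolding Sub_def using finite_subset by blast

lemma rk_less: "finite A \<Longrightarrow> a \<in> A \<Longrightarrow> rk A a < card A"
  unfolding rk_def by (rule psubset_card_mono) auto

lemma rk_mono: "finite A \<Longrightarrow> a \<in> A \<Longrightarrow> a < b \<Longrightarrow> rk A a < rk A b"
  unfolding rk_def by (rule psubset_card_mono) auto

lemma rk_mono_le: "finite A \<Longrightarrow> a \<le> b \<Longrightarrow> rk A a \<le> rk A b"
  unfolding rk_def by (rule card_mono) auto

lemma rk_inj: "finite A \<Longrightarrow> inj_on (rk A) A"
  unfolding inj_on_def
  by (metis linorder_neqE_nat nat_less_le rk_mono)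

lemma rk_bij: "finite A \<Longrightarrow> bij_betw (rk A) A {..<card A}"
proof -
  assume f: "finite A"
  have "rk A ` A \<subseteq> {..<card A}" using rk_less f by auto
  moreover have "card (rk A ` A) = card {..<card A}"
    using card_image[OF rk_inj[OF f]] by simp
  ultimately have "rk A ` A = {..<card A}"
    by (simp add: card_subset_eq)
  then show ?thesis using rk_inj[OF f] by (simp add: bij_betw_def)
qed

lemma rk_eq_iff: "finite A \<Longrightarrow> a \<in> A \<Longrightarrow> b \<in> A \<Longrightarrow> rk A a = rk A b \<longleftrightarrow> a = b"
  using rk_inj[of A] unfolding inj_on_def by blast

lemma rk_less_iff: "finite A \<Longrightarrow> a \<in> A \<Longrightarrow> b \<in> A \<Longrightarrow> rk A a < rk A b \<longleftrightarrow> a < b"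
  by (metis linorder_neqE_nat not_less_iff_gr_or_eq rk_mono)

lemma nths_cong_len: "(\<And>i. i < length xs \<Longrightarrow> i \<in> A \<longleftrightarrow> i \<in> B) \<Longrightarrow> nths xs A = nths xs B"
proof (induction xs arbitrary: A B)
  case Nil then show ?case by simp
next
  case (Cons x xs)
  have "nths xs {j. Suc j \<in> A} = nths xs {j. Suc j \<in> B}"
    by (rule Cons.IH) (use Cons.prems in auto)
  moreover have "0 \<in> A \<longleftrightarrow> 0 \<in> B" using Cons.prems by auto
  ultimately show ?case by (simp add: nths_Cons)
qed

lemma nths_single: "i < length xs \<Longrightarrow> nths xs {i} = [xs ! i]"
proof (induction xs arbitrary: i)
  case Nil then show ?case by simp
next
  case (Cons x xs)
  then show ?case
  proof (cases i)
    case 0 then show ?thesis by (simp add: nths_Cons)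
  next
    case (Suc k)
    then have "{j. Suc j \<in> {i}} = {k}" by auto
    then show ?thesis using Cons Suc by (simp add: nths_Cons)
  qed
qed

lemma length_nths_sub: "A \<subseteq> {..<length xs} \<Longrightarrow> length (nths xs A) = card A"
  unfolding length_nths by (rule arg_cong[where f=card]) auto

lemma nths_nths_rk: "nths (nths xs A) B = nths xs {i \<in> A. rk A i \<in> B}"
  unfolding nths_nths rk_def by (rule arg_cong[where f="nths xs"]) auto

lemma nths_rk_image: "finite A \<Longrightarrow> B \<subseteq> A \<Longrightarrow> nths (nths xs A) (rk A ` B) = nths xs B"
  unfolding nths_nths_rk
  by (rule arg_cong[where f="nths xs"]) (auto simp: rk_eq_iff subset_iff)

lemma nths_rk_nth:
  assumes "finite A" "a \<in> A" "A \<subseteq> {..<length xs}"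
  shows "nths xs A ! rk A a = xs ! a"
proof -
  have l: "rk A a < length (nths xs A)"
    using rk_less[OF assms(1,2)] length_nths_sub[OF assms(3)] by simp
  have "[nths xs A ! rk A a] = nths (nths xs A) (rk A ` {a})"
    using nths_single[OF l] by simp
  also have "\<dots> = nths xs {a}" using assms by (intro nths_rk_image) auto
  also have "\<dots> = [xs ! a]" using assms by (intro nths_single) auto
  finally show ?thesis by simp
qed

lemma del_nth_nths: "del_nth i xs = nths xs (- {i})"
proof (induction xs arbitrary: i)
  case Nil then show ?case by (simp add: del_nth_def)
next
  case (Cons x xs)
  show ?case
  proof (cases i)
    case 0 then show ?thesis
      by (simp add: del_nth_def nths_Cons) (metis Collect_const nths_all UNIV_I)
  next
    case (Suc k)
    have "{j. Suc j \<in> - {i}} = - {k}" using Suc by auto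
    then show ?thesis using Cons.IH[of k] Suc by (simp add: del_nth_def nths_Cons)
  qed
qed

lemma del_nth_rk:
  assumes "finite A" "a \<in> A"
  shows "del_nth (rk A a) (nths xs A) = nths xs (A - {a})"
  unfolding del_nth_nths nths_nths_rk
  by (rule arg_cong[where f="nths xs"]) (use assms in \<open>auto simp: rk_eq_iff\<close>)

lemma sum_rk_reindex:
  "finite A \<Longrightarrow> (\<Sum>a<card A. f a) = (\<Sum>t\<in>A. f (rk A t))"
  using sum.reindex_bij_betw[OF rk_bij, of A f] by simp

lemma sum_rk_pairs_reindex:
  assumes f: "finite A"
  shows "(\<Sum>(a, b)\<in>{(a, b). a < b \<and> b < card A}. g a b)
       = (\<Sum>(s, t)\<in>{(s, t). s \<in> A \<and> t \<in> A \<and> s < t}. g (rk A s) (rk A t))"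
proof -
  let ?h = "\<lambda>(s, t). (rk A s, rk A t)"
  have b: "bij_betw (rk A) A {..<card A}" using rk_bij[OF f] .
  have "bij_betw ?h {(s, t). s \<in> A \<and> t \<in> A \<and> s < t} {(a, b). a < b \<and> b < card A}"
  proof (rule bij_betwI')
    fix x y assume "x \<in> {(s, t). s \<in> A \<and> t \<in> A \<and> s < t}" "y \<in> {(s, t). s \<in> A \<and> t \<in> A \<and> s < t}"
    then show "(?h x = ?h y) = (x = y)" using f by (auto simp: rk_eq_iff)
  next
    fix x assume "x \<in> {(s, t). s \<in> A \<and> t \<in> A \<and> s < t}"
    then show "?h x \<in> {(a, b). a < b \<and> b < card A}" using f rk_mono rk_less by auto
  next
    fix y assume y: "y \<in> {(a, b). a < b \<and> b < card A}"
    then obtain a b where ab: "y = (a, b)" "a < b" "b < card A" by auto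
    then obtain s t where "s \<in> A" "t \<in> A" "rk A s = a" "rk A t = b"
      using b unfolding bij_betw_def
      by (metis imageE lessThan_iff order.strict_trans)
    then show "\<exists>x\<in>{(s, t). s \<in> A \<and> t \<in> A \<and> s < t}. y = ?h x"
      using ab f rk_less_iff by (intro bexI[of _ "(s, t)"]) auto
  qed
  from sum.reindex_bij_betw[OF this, of "\<lambda>(a, b). g a b"] show ?thesis
    by (simp add: case_prod_beta)
qed

lemma rk_img_pre:
  assumes f: "finite A" and B: "B \<subseteq> {..<card A}"
  shows "rk A ` {a \<in> A. rk A a \<in> B} = B"
proof
  have im: "rk A ` A = {..<card A}" using rk_bij[OF f] by (simp add: bij_betw_def)
  show "rk A ` {a \<in> A. rk A a \<in> B} \<subseteq> B" by auto
  show "B \<subseteq> rk A ` {a \<in> A. rk A a \<in> B}"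
  proof
    fix b assume "b \<in> B"
    then have "b \<in> rk A ` A" using B im by auto
    then show "b \<in> rk A ` {a \<in> A. rk A a \<in> B}" using \<open>b \<in> B\<close> by auto
  qed
qed

lemma sub_reindex:
  assumes f: "finite A"
  shows "(\<Sum>S\<in>Sub {..<card A} p. g S) = (\<Sum>S\<in>Sub A p. g (rk A ` S))"
proof (rule sum.reindex_bij_witness[where j="\<lambda>B. {a\<in>A. rk A a \<in> B}" and i="\<lambda>S. rk A ` S"])
  fix S assume S: "S \<in> Sub A p"
  then show "{a \<in> A. rk A a \<in> rk A ` S} = S" using f by (auto simp: Sub_def rk_eq_iff)
  show "rk A ` S \<in> Sub {..<card A} p"
    using S f rk_less card_image[OF inj_on_subset[OF rk_inj[OF f]]] by (auto simp: Sub_def)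
next
  fix B assume B: "B \<in> Sub {..<card A} p"
  show "rk A ` {a \<in> A. rk A a \<in> B} = B" using rk_img_pre[OF f] B by (auto simp: Sub_def)
  then have "card {a \<in> A. rk A a \<in> B} = p"
    using B card_image[OF inj_on_subset[OF rk_inj[OF f]], of "{a \<in> A. rk A a \<in> B}"]
    by (auto simp: Sub_def)
  then show "{a \<in> A. rk A a \<in> B} \<in> Sub A p" by (auto simp: Sub_def)
qed (use rk_img_pre[OF f] in \<open>auto simp: Sub_def\<close>)

lemma sum_Sub_nths:
  assumes f: "finite A" and A: "A \<subseteq> {..<length xs}"
  shows "(\<Sum>S\<in>Sub {..<card A} p. H (\<Sum>S) (nths (nths xs A) S) (nths (nths xs A) ({..<card A} - S)))
       = (\<Sum>S\<in>Sub A p. H (\<Sum>s\<in>S. rk A s) (nths xs S) (nths xs (A - S)))"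
  unfolding sub_reindex[OF f]
proof (rule sum.cong[OF refl])
  fix S assume S: "S \<in> Sub A p"
  then have SA: "S \<subseteq> A" by (simp add: Sub_def)
  have im: "rk A ` A = {..<card A}" using rk_bij[OF f] by (simp add: bij_betw_def)
  have 1: "\<Sum> (rk A ` S) = (\<Sum>s\<in>S. rk A s)"
    using sum.reindex[OF inj_on_subset[OF rk_inj[OF f] SA], of id] by simp
  have 2: "{..<card A} - rk A ` S = rk A ` (A - S)"
    unfolding im[symmetric] using inj_on_image_set_diff[OF rk_inj[OF f], of A S] SA by auto
  show "H (\<Sum> (rk A ` S)) (nths (nths xs A) (rk A ` S)) (nths (nths xs A) ({..<card A} - rk A ` S))
      = H (\<Sum>s\<in>S. rk A s) (nths xs S) (nths xs (A - S))"
    unfolding 1 2 by (simp only: nths_rk_image[OF f SA] nths_rk_image[OF f Diff_subset])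
qed

lemma sum_Sub_Suc:
  "(\<Sum>S\<in>Sub {..<Suc m} p. g S)
   = (if p = 0 then 0 else (\<Sum>R\<in>Sub {..<m} (p - 1). g (insert 0 (Suc ` R))))
     + (\<Sum>R\<in>Sub {..<m} p. g (Suc ` R))"
proof -
  let ?X = "Sub {..<Suc m} p"
  have fin: "finite ?X" by simp
  have eqX: "?X = {S\<in>?X. 0 \<in> S} \<union> {S\<in>?X. 0 \<notin> S}" by auto
  have split: "sum g ?X = sum g {S\<in>?X. 0 \<in> S} + sum g {S\<in>?X. 0 \<notin> S}"
    using sum.union_disjoint[of "{S\<in>?X. 0 \<in> S}" "{S\<in>?X. 0 \<notin> S}" g] fin
    by (metis (no_types, lifting) eqX disjoint_iff finite_Un mem_Collect_eq)
  have p1: "sum g {S\<in>?X. 0 \<in> S}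
      = (if p = 0 then 0 else (\<Sum>R\<in>Sub {..<m} (p - 1). g (insert 0 (Suc ` R))))"
  proof (cases "p = 0")
    case True
    have e: "{S\<in>?X. 0 \<in> S} = {}"
    proof -
      have "S = {}" if "S \<in> ?X" for S
      proof -
        have "finite S" using that by (auto simp: Sub_def intro: finite_subset[of _ "{..<Suc m}"])
        then show ?thesis using that True by (simp add: Sub_def)
      qed
      then show ?thesis by auto
    qed
    show ?thesis unfolding e using True by simp
  next
    case False
    have "(\<Sum>R\<in>Sub {..<m} (p - 1). g (insert 0 (Suc ` R))) = sum g {S\<in>?X. 0 \<in> S}"
    proof (rule sum.reindex_bij_witness[where i="\<lambda>S. {j. Suc j \<in> S}" and j="\<lambda>R. insert 0 (Suc ` R)"])
      fix R assume R: "R \<in> Sub {..<m} (p - 1)"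
      then have fR: "finite R" by (auto simp: Sub_def dest: finite_subset)
      show "{j. Suc j \<in> insert 0 (Suc ` R)} = R" by auto
      have "card (insert 0 (Suc ` R)) = Suc (card R)"
        using fR by (simp add: card_image)
      then show "insert 0 (Suc ` R) \<in> {S \<in> ?X. 0 \<in> S}"
        using R False by (auto simp: Sub_def)
    next
      fix S assume S: "S \<in> {S \<in> ?X. 0 \<in> S}"
      then have fS: "finite S" and S0: "0 \<in> S" and Ss: "S \<subseteq> {..<Suc m}" and cS: "card S = p"
        by (auto simp: Sub_def dest: finite_subset)
      show eq: "insert 0 (Suc ` {j. Suc j \<in> S}) = S"
        using S0 by (auto simp: image_iff) (metis not0_implies_Suc)
      have fR: "finite {j. Suc j \<in> S}"
        using Ss by (rule_tac finite_subset[of _ "{..<m}"]) auto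
      have "card S = Suc (card {j. Suc j \<in> S})"
        using eq fR by (metis card_image card_insert_disjoint finite_imageI image_iff inj_Suc inj_on_subset
            nat.distinct(1) subset_UNIV)
      then show "{j. Suc j \<in> S} \<in> Sub {..<m} (p - 1)"
        using Ss cS by (auto simp: Sub_def)
    qed simp
    then show ?thesis using False by simp
  qed
  have p2: "sum g {S\<in>?X. 0 \<notin> S} = (\<Sum>R\<in>Sub {..<m} p. g (Suc ` R))"
  proof (rule sum.reindex_bij_witness[where i="\<lambda>S. {j. Suc j \<in> S}" and j="\<lambda>R. Suc ` R", symmetric])
    fix R assume R: "R \<in> Sub {..<m} p"
    then have fR: "finite R" by (auto simp: Sub_def dest: finite_subset)
    show "{j. Suc j \<in> Suc ` R} = R" by auto
    show "Suc ` R \<in> {S \<in> ?X. 0 \<notin> S}"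
      using R fR by (auto simp: Sub_def card_image)
  next
    fix S assume S: "S \<in> {S \<in> ?X. 0 \<notin> S}"
    then have S0: "0 \<notin> S" and Ss: "S \<subseteq> {..<Suc m}" and cS: "card S = p"
      by (auto simp: Sub_def)
    show eq: "Suc ` {j. Suc j \<in> S} = S"
      using S0 by (auto simp: image_iff) (metis not0_implies_Suc)
    have "card S = card {j. Suc j \<in> S}"
      using eq by (metis card_image inj_Suc inj_on_subset subset_UNIV)
    then show "{j. Suc j \<in> S} \<in> Sub {..<m} p"
      using Ss cS by (auto simp: Sub_def)
  qed simp
  show ?thesis using split p1 p2 by simp
qed

lemma Suc_img_pre[simp]: "{j. Suc j \<in> Suc ` R} = R" by auto
lemma Suc_img_pre2[simp]: "{j. Suc j \<in> insert 0 (Suc ` R)} = R" by auto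
lemma sum_Suc_id: "finite R \<Longrightarrow> sum Suc R = \<Sum>R + card R"
  by (induction rule: finite_induct) auto

lemma nths_Cons_ins: "nths (y # ys) (insert 0 (Suc ` R)) = y # nths ys R"
  by (simp add: nths_Cons)
lemma nths_Cons_ins_c: "nths (y # ys) ({..<Suc m} - insert 0 (Suc ` R)) = nths ys ({..<m} - R)"
  by (simp add: nths_Cons) (rule arg_cong[where f="nths ys"], auto)
lemma nths_Cons_suc: "nths (y # ys) (Suc ` R) = nths ys R"
  by (simp add: nths_Cons)
lemma nths_Cons_suc_c: "nths (y # ys) ({..<Suc m} - Suc ` R) = y # nths ys ({..<m} - R)"
  by (simp add: nths_Cons) (rule arg_cong[where f="nths ys"], auto)

lemma sum_Suc_img: "finite R \<Longrightarrow> \<Sum>(Suc ` R) = \<Sum>R + card R"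
  by (simp add: sum.reindex sum_Suc_id)
lemma sum_ins_Suc_img: "finite R \<Longrightarrow> \<Sum>(insert 0 (Suc ` R)) = \<Sum>R + card R"
  by (simp add: sum.reindex sum_Suc_id)

lemma sgn_pow_0[simp]: "sgn_pow 0 x = x" by (simp add: sgn_pow_def)
lemma sgn_pow_Suc: "sgn_pow (Suc n) x = - sgn_pow n x" by (simp add: sgn_pow_def)
lemma sgn_pow_add_exp: "sgn_pow (a + b) x = sgn_pow a (sgn_pow b x)"
  by (simp add: sgn_pow_def)
lemma sgn_pow_plus: "sgn_pow n (x + y) = sgn_pow n x + sgn_pow n y"
  by (simp add: sgn_pow_def)
lemma sgn_pow_minus: "sgn_pow n (- x) = - sgn_pow n x"
  by (simp add: sgn_pow_def)
lemma sgn_pow_diff: "sgn_pow n (x - y) = sgn_pow n x - sgn_pow n y"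
  by (simp add: sgn_pow_def)
lemma sgn_pow_zero[simp]: "sgn_pow n 0 = 0"
  by (simp add: sgn_pow_def)
lemma sgn_pow_sum: "sgn_pow n (\<Sum>i\<in>I. f i) = (\<Sum>i\<in>I. sgn_pow n (f i))"
  by (simp add: sgn_pow_def sum_negf)
lemma sgn_pow_parity: "even a = even b \<Longrightarrow> sgn_pow a x = sgn_pow b x"
  by (simp add: sgn_pow_def)
lemma sgn_pow_odd: "even a \<noteq> even b \<Longrightarrow> sgn_pow a x = - sgn_pow b x"
  by (simp add: sgn_pow_def)

lemma rk_minus:
  assumes "s \<le> n"
  shows "rk ({..<n} - X) s + card {x\<in>X. x < s} = s"
proof -
  have "{k\<in>{..<n} - X. k < s} \<union> {x\<in>X. x < s} = {..<s}" using assms by auto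
  moreover have "{k\<in>{..<n} - X. k < s} \<inter> {x\<in>X. x < s} = {}" by auto
  moreover have "finite {k\<in>{..<n} - X. k < s}" "finite {x\<in>X. x < s}" by auto
  ultimately show ?thesis unfolding rk_def
    by (metis card_Un_disjoint card_lessThan)
qed

lemma card_lt_gt:
  assumes "finite (S :: nat set)" "i \<notin> S"
  shows "card {s\<in>S. s < i} + card {s\<in>S. i < s} = card S"
proof -
  have "x < i" if "x \<in> S" "\<not> i < x" for x using that assms(2) by (metis linorder_neqE_nat)
  then have "{s\<in>S. s < i} \<union> {s\<in>S. i < s} = S" by auto
  moreover have "{s\<in>S. s < i} \<inter> {s\<in>S. i < s} = {}" by auto
  ultimately show ?thesis using assms(1)
    by (metis (no_types, lifting) card_Un_disjoint finite_Un)
qed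

lemma card_filter_sum: "finite X \<Longrightarrow> card {x\<in>X. P x} = (\<Sum>x\<in>X. if P x then 1 else 0)"
  by (simp add: sum.inter_filter[symmetric])

lemma double_count:
  assumes "finite S" "finite X"
  shows "(\<Sum>s\<in>S. card {x\<in>X. x < s}) = (\<Sum>x\<in>X. card {s\<in>S. x < s})"
  using assms by (simp add: card_filter_sum sum.swap[of _ S X])

lemma sum_rk_minus:
  assumes fS: "finite S" and fX: "finite X" and S: "S \<subseteq> {..<n} - X"
  shows "(\<Sum>s\<in>S. rk ({..<n} - X) s) + (\<Sum>x\<in>X. card {s\<in>S. x < s}) = \<Sum>S"
proof -
  have "(\<Sum>s\<in>S. rk ({..<n} - X) s) + (\<Sum>x\<in>X. card {s\<in>S. x < s})
      = (\<Sum>s\<in>S. rk ({..<n} - X) s + card {x\<in>X. x < s})"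
    using double_count[OF fS fX] by (simp add: sum.distrib)
  also have "\<dots> = (\<Sum>s\<in>S. s)"
    by (rule sum.cong[OF refl]) (use S rk_minus in \<open>auto\<close>)
  finally show ?thesis by simp
qed


definition W :: "nat \<Rightarrow> nat \<Rightarrow> ('g list \<Rightarrow> 'g list \<Rightarrow> 'x::ab_group_add) \<Rightarrow> 'g list \<Rightarrow> 'x" where
  "W p q F xs = (\<Sum>S\<in>Sub {..<p + q} p. sgn_pow (\<Sum>S + p * (p - 1) div 2)
                   (F (nths xs S) (nths xs ({..<p + q} - S))))"

lemma lp_ext_W: "lp_ext alpha p q eta xs = W p q (\<lambda>ys zs. alpha q (eta ys) zs) xs"
  unfolding lp_ext_def W_def Sub_def by simp

lemma length_del_nth: "i < length xs \<Longrightarrow> length (del_nth i xs) = length xs - 1"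
  by (simp add: del_nth_def)

lemma rk_remove_larger: "s < t \<Longrightarrow> rk (T - {t}) s = rk T s"
  unfolding rk_def by (rule arg_cong[where f=card]) auto

lemma tri_div: "Suc p * p div 2 = p * (p - 1) div 2 + p"
proof (cases p)
  case 0 then show ?thesis by simp
next
  case (Suc k)
  have "Suc p * p = p * (p - 1) + 2 * p" using Suc by (simp add: algebra_simps)
  then show ?thesis by simp
qed

lemma del2_rk:
  assumes "finite A" "s \<in> A" "t \<in> A" "s < t"
  shows "del_nth (rk A s) (del_nth (rk A t) (nths xs A)) = nths xs (A - {s, t})"
proof -
  have "del_nth (rk A t) (nths xs A) = nths xs (A - {t})" by (rule del_nth_rk[OF assms(1,3)])
  moreover have "rk A s = rk (A - {t}) s" using rk_remove_larger[OF assms(4)] by simp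
  moreover have "del_nth (rk (A - {t}) s) (nths xs (A - {t})) = nths xs (A - {t} - {s})"
    using assms by (intro del_nth_rk) auto
  moreover have "A - {t} - {s} = A - {s, t}" by auto
  ultimately show ?thesis by simp
qed

locale core =
  fixes br :: "'g::ab_group_add \<Rightarrow> 'g \<Rightarrow> 'g" and rho :: "'g \<Rightarrow> 'v::ab_group_add \<Rightarrow> 'v"
    and Phi :: "'v \<Rightarrow> 'g list \<Rightarrow> 'g" and M :: "'v set" and q :: nat
  assumes br_add: "br x (y + z) = br x y + br x z"
    and Phi_add: "v \<in> M \<Longrightarrow> w \<in> M \<Longrightarrow> length zs = q \<Longrightarrow> Phi (v + w) zs = Phi v zs + Phi w zs"
    and M_zero: "0 \<in> M" and M_add: "v \<in> M \<Longrightarrow> w \<in> M \<Longrightarrow> v + w \<in> M"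
    and M_uminus: "v \<in> M \<Longrightarrow> - v \<in> M"
    and M_rho: "v \<in> M \<Longrightarrow> rho x v \<in> M"
begin

definition Psi :: "'v \<Rightarrow> 'g list \<Rightarrow> 'g" where
  "Psi v zs = (\<Sum>i<length zs. sgn_pow i (br (zs ! i) (Phi v (del_nth i zs))
                                 - Phi (rho (zs ! i) v) (del_nth i zs)))
         + (\<Sum>(i, j)\<in>{(i, j). i < j \<and> j < length zs}.
              sgn_pow (i + j) (Phi v (br (zs ! i) (zs ! j) # del_nth i (del_nth j zs))))"

lemma br_zero: "br x 0 = 0"
  using br_add[of x 0 0] by simp
lemma br_minus: "br x (- y) = - br x y"
  using br_add[of x y "- y"] br_zero by (metis add.right_inverse minus_unique)
lemma br_diff: "br x (y - z) = br x y - br x z"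
  using br_add[of x y "- z"] br_minus by simp
lemma br_sum: "br x (\<Sum>i\<in>I. f i) = (\<Sum>i\<in>I. br x (f i))"
  by (induction I rule: infinite_finite_induct) (auto simp: br_zero br_add)
lemma br_sgn: "br x (sgn_pow n y) = sgn_pow n (br x y)"
  by (simp add: sgn_pow_def br_minus)

lemma M_sum: "(\<And>i. i \<in> I \<Longrightarrow> f i \<in> M) \<Longrightarrow> (\<Sum>i\<in>I. f i) \<in> M"
  by (induction I rule: infinite_finite_induct) (auto simp: M_zero M_add)
lemma M_sgn: "v \<in> M \<Longrightarrow> sgn_pow n v \<in> M"
  by (simp add: sgn_pow_def M_uminus)

lemma Phi_zero: "length zs = q \<Longrightarrow> Phi 0 zs = 0"
  using Phi_add[OF M_zero M_zero] by simp
lemma Phi_minus: "v \<in> M \<Longrightarrow> length zs = q \<Longrightarrow> Phi (- v) zs = - Phi v zs"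
  using Phi_add[OF M_uminus, of v v zs] Phi_zero by (simp add: eq_neg_iff_add_eq_0)
lemma Phi_sum: "(\<And>i. i \<in> I \<Longrightarrow> f i \<in> M) \<Longrightarrow> length zs = q \<Longrightarrow>
    Phi (\<Sum>i\<in>I. f i) zs = (\<Sum>i\<in>I. Phi (f i) zs)"
proof (induction I rule: infinite_finite_induct)
  case (insert x F)
  then show ?case using Phi_add[of "f x" "sum f F" zs] M_sum[of F f] by auto
qed (auto simp: Phi_zero)
lemma Phi_sgn: "v \<in> M \<Longrightarrow> length zs = q \<Longrightarrow> Phi (sgn_pow n v) zs = sgn_pow n (Phi v zs)"
  by (simp add: sgn_pow_def Phi_minus)

lemma Psi_nths:
  assumes fA: "finite A" and AL: "A \<subseteq> {..<length xs}"
  shows "Psi v (nths xs A)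
   = (\<Sum>i\<in>A. sgn_pow (rk A i) (br (xs ! i) (Phi v (nths xs (A - {i})))
                                 - Phi (rho (xs ! i) v) (nths xs (A - {i}))))
   + (\<Sum>(i, j)\<in>{(i, j). i \<in> A \<and> j \<in> A \<and> i < j}.
        sgn_pow (rk A i + rk A j) (Phi v (br (xs ! i) (xs ! j) # nths xs (A - {i, j}))))"
proof -
  define zs where "zs = nths xs A"
  have lzs: "length zs = card A" unfolding zs_def using length_nths_sub[OF AL] .
  have 1: "(\<Sum>i<length zs. sgn_pow i (br (zs ! i) (Phi v (del_nth i zs)) - Phi (rho (zs ! i) v) (del_nth i zs)))
     = (\<Sum>i\<in>A. sgn_pow (rk A i) (br (xs ! i) (Phi v (nths xs (A - {i})))
                                 - Phi (rho (xs ! i) v) (nths xs (A - {i}))))"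
    unfolding lzs unfolding sum_rk_reindex[OF fA] unfolding zs_def
    by (intro sum.cong refl) (simp add: nths_rk_nth[OF fA _ AL] del_nth_rk[OF fA])
  have 2: "(\<Sum>(i, j)\<in>{(i, j). i < j \<and> j < length zs}.
              sgn_pow (i + j) (Phi v (br (zs ! i) (zs ! j) # del_nth i (del_nth j zs))))
      = (\<Sum>(i, j)\<in>{(i, j). i \<in> A \<and> j \<in> A \<and> i < j}.
        sgn_pow (rk A i + rk A j) (Phi v (br (xs ! i) (xs ! j) # nths xs (A - {i, j}))))"
    unfolding lzs unfolding sum_rk_pairs_reindex[OF fA] unfolding zs_def
    by (intro sum.cong refl) (auto simp: nths_rk_nth[OF fA _ AL] del2_rk[OF fA])
  show ?thesis unfolding Psi_def zs_def[symmetric] 1 2 ..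
qed

lemma W_del:
  assumes len: "length xs = Suc (p + q)" and i: "i < Suc (p + q)"
  shows "W p q F (del_nth i xs) = (\<Sum>S\<in>Sub ({..<Suc (p + q)} - {i}) p.
      sgn_pow ((\<Sum>s\<in>S. rk ({..<Suc (p + q)} - {i}) s) + p * (p - 1) div 2)
        (F (nths xs S) (nths xs ({..<Suc (p + q)} - {i} - S))))"
proof -
  define A where "A = {..<Suc (p + q)} - {i}"
  have fA: "finite A" and AL: "A \<subseteq> {..<length xs}" using len unfolding A_def by auto
  have cA: "card A = p + q" unfolding A_def using i by simp
  have d: "del_nth i xs = nths xs A"
    unfolding del_nth_nths A_def by (rule nths_cong_len) (use len in auto)
  have "W p q F (nths xs A) = (\<Sum>S\<in>Sub {..<card A} p. sgn_pow (\<Sum>S + p * (p - 1) div 2)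
          (F (nths (nths xs A) S) (nths (nths xs A) ({..<card A} - S))))"
    unfolding W_def cA ..
  also have "\<dots> = (\<Sum>S\<in>Sub A p. sgn_pow ((\<Sum>s\<in>S. rk A s) + p * (p - 1) div 2)
          (F (nths xs S) (nths xs (A - S))))"
    using sum_Sub_nths[OF fA AL, where p=p and H="\<lambda>k l1 l2. sgn_pow (k + p * (p - 1) div 2) (F l1 l2)"]
    by (simp only:)
  finally show ?thesis unfolding d A_def .
qed

lemma W_cons:
  assumes len: "length xs = Suc (p + q)" and ij: "i < j" "j < Suc (p + q)"
  shows "W p q F (y # del_nth i (del_nth j xs))
   = (if p = 0 then 0 else (\<Sum>S\<in>Sub ({..<Suc (p + q)} - {i, j}) (p - 1).
        sgn_pow ((\<Sum>s\<in>S. rk ({..<Suc (p + q)} - {i, j}) s) + (p - 1) + p * (p - 1) div 2)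
          (F (y # nths xs S) (nths xs ({..<Suc (p + q)} - {i, j} - S)))))
   + (\<Sum>S\<in>Sub ({..<Suc (p + q)} - {i, j}) p.
        sgn_pow ((\<Sum>s\<in>S. rk ({..<Suc (p + q)} - {i, j}) s) + p + p * (p - 1) div 2)
          (F (nths xs S) (y # nths xs ({..<Suc (p + q)} - {i, j} - S))))"
proof -
  define A where "A = {..<Suc (p + q)} - {i, j}"
  define c where "c = p * (p - 1) div 2"
  have fA: "finite A" and AL: "A \<subseteq> {..<length xs}" using len unfolding A_def by auto
  have cA: "Suc (card A) = p + q" unfolding A_def using ij by (simp add: card_Diff_subset)
  have d: "del_nth i (del_nth j xs) = nths xs A"
  proof -
    have "del_nth j xs = nths xs ({..<Suc (p + q)} - {j})"
      unfolding del_nth_nths by (rule nths_cong_len) (use len in auto)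
    moreover have "rk ({..<Suc (p + q)} - {j}) i = i"
    proof -
      have h: "rk ({..<Suc (p + q)} - {j}) i + card {x\<in>{j}. x < i} = i"
        by (rule rk_minus) (use ij in simp)
      have e: "{x\<in>{j}. x < i} = {}" using ij by auto
      show ?thesis using h unfolding e by simp
    qed
    moreover have "del_nth (rk ({..<Suc (p + q)} - {j}) i) (nths xs ({..<Suc (p + q)} - {j}))
        = nths xs ({..<Suc (p + q)} - {j} - {i})"
      using ij by (intro del_nth_rk) auto
    moreover have "{..<Suc (p + q)} - {j} - {i} = A" unfolding A_def by auto
    ultimately show ?thesis by simp
  qed
  define ys where "ys = nths xs A"
  have "W p q F (y # ys) = (\<Sum>S\<in>Sub {..<Suc (card A)} p. sgn_pow (\<Sum>S + c)
                   (F (nths (y # ys) S) (nths (y # ys) ({..<Suc (card A)} - S))))"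
    unfolding W_def cA c_def ..
  also have "\<dots> = (if p = 0 then 0 else (\<Sum>R\<in>Sub {..<card A} (p - 1).
        sgn_pow (\<Sum>(insert 0 (Suc ` R)) + c) (F (y # nths ys R) (nths ys ({..<card A} - R)))))
     + (\<Sum>R\<in>Sub {..<card A} p. sgn_pow (\<Sum>(Suc ` R) + c) (F (nths ys R) (y # nths ys ({..<card A} - R))))"
    unfolding sum_Sub_Suc nths_Cons_ins nths_Cons_ins_c nths_Cons_suc nths_Cons_suc_c ..
  also have "\<dots> = (if p = 0 then 0 else (\<Sum>R\<in>Sub {..<card A} (p - 1).
        sgn_pow (\<Sum>R + (p - 1) + c) (F (y # nths ys R) (nths ys ({..<card A} - R)))))
     + (\<Sum>R\<in>Sub {..<card A} p. sgn_pow (\<Sum>R + p + c) (F (nths ys R) (y # nths ys ({..<card A} - R))))"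
  proof -
    have fR: "\<And>R k. R \<in> Sub {..<card A} k \<Longrightarrow> finite R" using Sub_finite[of "{..<card A}"] by blast
    have cR: "\<And>R k. R \<in> Sub {..<card A} k \<Longrightarrow> card R = k" by (simp add: Sub_def)
    have A1: "\<Sum>(insert 0 (Suc ` R)) = \<Sum>R + (p - 1)" if R: "R \<in> Sub {..<card A} (p - 1)" for R
      using sum_ins_Suc_img[OF fR[OF R]] cR[OF R] by (simp only:)
    have A2: "\<Sum>(Suc ` R) = \<Sum>R + p" if R: "R \<in> Sub {..<card A} p" for R
      using sum_Suc_img[OF fR[OF R]] cR[OF R] by (simp only:)
    show ?thesis
      by (intro arg_cong2[where f="(+)"] if_cong refl sum.cong) (simp_all only: A1 A2)
  qed
  also have "\<dots> = (if p = 0 then 0 else (\<Sum>S\<in>Sub A (p - 1).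
        sgn_pow ((\<Sum>s\<in>S. rk A s) + (p - 1) + c) (F (y # nths xs S) (nths xs (A - S)))))
     + (\<Sum>S\<in>Sub A p. sgn_pow ((\<Sum>s\<in>S. rk A s) + p + c) (F (nths xs S) (y # nths xs (A - S))))"
    unfolding ys_def
    using sum_Sub_nths[OF fA AL, where p="p - 1" and H="\<lambda>k l1 l2. sgn_pow (k + (p - 1) + c) (F (y # l1) l2)"]
      sum_Sub_nths[OF fA AL, where p=p and H="\<lambda>k l1 l2. sgn_pow (k + p + c) (F l1 (y # l2))"]
    by (simp only:)
  finally show ?thesis unfolding d ys_def A_def c_def .
qed

context
  fixes eta :: "'g list \<Rightarrow> 'v" and p :: nat and xs :: "'g list"
  assumes eta_M: "\<And>ys. length ys = p \<Longrightarrow> eta ys \<in> M"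
    and len: "length xs = Suc (p + q)"
begin

abbreviation NN :: "nat set" where "NN \<equiv> {..<Suc (p + q)}"

lemma E1_inner:
  assumes T: "T \<in> Sub NN (Suc p)"
  shows "Phi (ce_diff br rho eta (nths xs T)) (nths xs (NN - T))
   = (\<Sum>t\<in>T. sgn_pow (rk T t) (Phi (rho (xs ! t) (eta (nths xs (T - {t})))) (nths xs (NN - T))))
   + (\<Sum>(s, t)\<in>{(s, t). s \<in> T \<and> t \<in> T \<and> s < t}.
        sgn_pow (rk T s + rk T t) (Phi (eta (br (xs ! s) (xs ! t) # nths xs (T - {s, t}))) (nths xs (NN - T))))"
proof -
  have TN: "T \<subseteq> NN" and cT: "card T = Suc p" using T by (auto simp: Sub_def)
  have fT: "finite T" using TN finite_subset by blast
  have TL: "T \<subseteq> {..<length xs}" using TN len by simp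
  define ys where "ys = nths xs T"
  define zs where "zs = nths xs (NN - T)"
  have lys: "length ys = Suc p" unfolding ys_def using length_nths_sub[OF TL] cT by simp
  have lzs: "length zs = q"
  proof -
    have "card (NN - T) = q" using card_Diff_subset[OF fT TN] cT by simp
    then show ?thesis unfolding zs_def using length_nths_sub[of "NN - T" xs] len by auto
  qed
  define X where "X = (\<Sum>a<length ys. sgn_pow a (rho (ys ! a) (eta (del_nth a ys))))"
  define Y where "Y = (\<Sum>(a, b)\<in>{(a, b). a < b \<and> b < length ys}.
          sgn_pow (a + b) (eta (br (ys ! a) (ys ! b) # del_nth a (del_nth b ys))))"
  have ce: "ce_diff br rho eta ys = X + Y" unfolding ce_diff_def X_def Y_def by simp
  have XM: "X \<in> M" unfolding X_def
    by (intro M_sum M_sgn M_rho eta_M) (simp add: length_del_nth lys)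
  have YM: "Y \<in> M" unfolding Y_def
  proof (intro M_sum)
    fix i assume "i \<in> {(a, b). a < b \<and> b < length ys}"
    then obtain a b where i: "i = (a, b)" "a < b" "b < length ys" by auto
    have "length (br (ys ! a) (ys ! b) # del_nth a (del_nth b ys)) = p"
      using i lys by (simp add: length_del_nth)
    then show "(case i of (a, b) \<Rightarrow> sgn_pow (a + b) (eta (br (ys ! a) (ys ! b) # del_nth a (del_nth b ys)))) \<in> M"
      using i by (simp add: M_sgn eta_M)
  qed
  have PX: "Phi X zs = (\<Sum>t\<in>T. sgn_pow (rk T t) (Phi (rho (xs ! t) (eta (nths xs (T - {t})))) zs))"
  proof -
    have "Phi X zs = (\<Sum>a<length ys. Phi (sgn_pow a (rho (ys ! a) (eta (del_nth a ys)))) zs)"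
      unfolding X_def by (rule Phi_sum[OF _ lzs]) (simp add: M_sgn M_rho eta_M length_del_nth lys)
    also have "\<dots> = (\<Sum>a<length ys. sgn_pow a (Phi (rho (ys ! a) (eta (del_nth a ys))) zs))"
      by (rule sum.cong[OF refl]) (simp add: Phi_sgn M_rho eta_M length_del_nth lys lzs)
    also have "\<dots> = (\<Sum>a<card T. sgn_pow a (Phi (rho (ys ! a) (eta (del_nth a ys))) zs))"
      by (simp only: lys cT)
    also have "\<dots> = (\<Sum>t\<in>T. sgn_pow (rk T t) (Phi (rho (ys ! rk T t) (eta (del_nth (rk T t) ys))) zs))"
      by (rule sum_rk_reindex[OF fT])
    also have "\<dots> = (\<Sum>t\<in>T. sgn_pow (rk T t) (Phi (rho (xs ! t) (eta (nths xs (T - {t})))) zs))"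
      unfolding ys_def by (intro sum.cong refl) (simp add: nths_rk_nth[OF fT _ TL] del_nth_rk[OF fT])
    finally show ?thesis .
  qed
  have PY: "Phi Y zs = (\<Sum>(s, t)\<in>{(s, t). s \<in> T \<and> t \<in> T \<and> s < t}.
        sgn_pow (rk T s + rk T t) (Phi (eta (br (xs ! s) (xs ! t) # nths xs (T - {s, t}))) zs))"
  proof -
    have "Phi Y zs = (\<Sum>i\<in>{(a, b). a < b \<and> b < length ys}.
            Phi (case i of (a, b) \<Rightarrow> sgn_pow (a + b) (eta (br (ys ! a) (ys ! b) # del_nth a (del_nth b ys)))) zs)"
      unfolding Y_def
    proof (intro Phi_sum lzs)
      fix i assume "i \<in> {(a, b). a < b \<and> b < length ys}"
      then obtain a b where i: "i = (a, b)" "a < b" "b < length ys" by auto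
      have "length (br (ys ! a) (ys ! b) # del_nth a (del_nth b ys)) = p"
        using i lys by (simp add: length_del_nth)
      then show "(case i of (a, b) \<Rightarrow> sgn_pow (a + b) (eta (br (ys ! a) (ys ! b) # del_nth a (del_nth b ys)))) \<in> M"
        using i by (simp add: M_sgn eta_M)
    qed
    also have "\<dots> = (\<Sum>(a, b)\<in>{(a, b). a < b \<and> b < length ys}.
            sgn_pow (a + b) (Phi (eta (br (ys ! a) (ys ! b) # del_nth a (del_nth b ys))) zs))"
    proof (rule sum.cong[OF refl])
      fix i assume "i \<in> {(a, b). a < b \<and> b < length ys}"
      then obtain a b where i: "i = (a, b)" "a < b" "b < length ys" by auto
      have "length (br (ys ! a) (ys ! b) # del_nth a (del_nth b ys)) = p"
        using i lys cT by (simp add: length_del_nth)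
      then show "Phi (case i of (a, b) \<Rightarrow> sgn_pow (a + b) (eta (br (ys ! a) (ys ! b) # del_nth a (del_nth b ys)))) zs
          = (case i of (a, b) \<Rightarrow> sgn_pow (a + b) (Phi (eta (br (ys ! a) (ys ! b) # del_nth a (del_nth b ys))) zs))"
        using i by (simp add: Phi_sgn eta_M lzs)
    qed
    also have "\<dots> = (\<Sum>(a, b)\<in>{(a, b). a < b \<and> b < card T}.
            sgn_pow (a + b) (Phi (eta (br (ys ! a) (ys ! b) # del_nth a (del_nth b ys))) zs))"
      by (simp only: lys cT)
    also have "\<dots> = (\<Sum>(s, t)\<in>{(s, t). s \<in> T \<and> t \<in> T \<and> s < t}.
        sgn_pow (rk T s + rk T t) (Phi (eta (br (ys ! rk T s) (ys ! rk T t) # del_nth (rk T s) (del_nth (rk T t) ys))) zs))"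
      by (rule sum_rk_pairs_reindex[OF fT])
    also have "\<dots> = (\<Sum>(s, t)\<in>{(s, t). s \<in> T \<and> t \<in> T \<and> s < t}.
        sgn_pow (rk T s + rk T t) (Phi (eta (br (xs ! s) (xs ! t) # nths xs (T - {s, t}))) zs))"
    proof (rule sum.cong[OF refl])
      fix i assume "i \<in> {(s, t). s \<in> T \<and> t \<in> T \<and> s < t}"
      then obtain s t where i: "i = (s, t)" "s \<in> T" "t \<in> T" "s < t" by auto
      have "del_nth (rk T s) (del_nth (rk T t) ys) = nths xs (T - {s, t})"
      proof -
        have "del_nth (rk T t) ys = nths xs (T - {t})" unfolding ys_def by (rule del_nth_rk[OF fT i(3)])
        moreover have "rk T s = rk (T - {t}) s" using rk_remove_larger[OF i(4)] by simp
        moreover have "del_nth (rk (T - {t}) s) (nths xs (T - {t})) = nths xs (T - {t} - {s})"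
          using fT i by (intro del_nth_rk) auto
        moreover have "T - {t} - {s} = T - {s, t}" by auto
        ultimately show ?thesis by simp
      qed
      then show "(case i of (s, t) \<Rightarrow> sgn_pow (rk T s + rk T t) (Phi (eta (br (ys ! rk T s) (ys ! rk T t) # del_nth (rk T s) (del_nth (rk T t) ys))) zs))
        = (case i of (s, t) \<Rightarrow> sgn_pow (rk T s + rk T t) (Phi (eta (br (xs ! s) (xs ! t) # nths xs (T - {s, t}))) zs))"
        using i unfolding ys_def using nths_rk_nth[OF fT _ TL] by simp
    qed
    finally show ?thesis .
  qed
  show ?thesis
    unfolding ys_def[symmetric] zs_def[symmetric] ce
    using Phi_add[OF XM YM lzs] PX PY by simp
qed

lemma E2:
  "sgn_pow p (W p (Suc q) (\<lambda>ys zs. Psi (eta ys) zs) xs)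
   = (\<Sum>S\<in>Sub NN p. \<Sum>i\<in>NN - S. sgn_pow (p + (\<Sum>S + p * (p - 1) div 2)) (sgn_pow (rk (NN - S) i)
        (br (xs ! i) (Phi (eta (nths xs S)) (nths xs (NN - S - {i})))
          - Phi (rho (xs ! i) (eta (nths xs S))) (nths xs (NN - S - {i})))))
   + (\<Sum>S\<in>Sub NN p. \<Sum>(i, j)\<in>{(i, j). i \<in> NN - S \<and> j \<in> NN - S \<and> i < j}.
        sgn_pow (p + (\<Sum>S + p * (p - 1) div 2)) (sgn_pow (rk (NN - S) i + rk (NN - S) j)
          (Phi (eta (nths xs S)) (br (xs ! i) (xs ! j) # nths xs (NN - S - {i, j})))))"
proof -
  have "sgn_pow p (W p (Suc q) (\<lambda>ys zs. Psi (eta ys) zs) xs)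
     = (\<Sum>S\<in>Sub NN p. sgn_pow (p + (\<Sum>S + p * (p - 1) div 2)) (Psi (eta (nths xs S)) (nths xs (NN - S))))"
    unfolding W_def by (simp add: sgn_pow_sum sgn_pow_add_exp)
  also have "\<dots> = (\<Sum>S\<in>Sub NN p. (\<Sum>i\<in>NN - S. sgn_pow (p + (\<Sum>S + p * (p - 1) div 2)) (sgn_pow (rk (NN - S) i)
        (br (xs ! i) (Phi (eta (nths xs S)) (nths xs (NN - S - {i})))
          - Phi (rho (xs ! i) (eta (nths xs S))) (nths xs (NN - S - {i})))))
     + (\<Sum>(i, j)\<in>{(i, j). i \<in> NN - S \<and> j \<in> NN - S \<and> i < j}.
        sgn_pow (p + (\<Sum>S + p * (p - 1) div 2)) (sgn_pow (rk (NN - S) i + rk (NN - S) j)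
          (Phi (eta (nths xs S)) (br (xs ! i) (xs ! j) # nths xs (NN - S - {i, j}))))))"
  proof -
    have fA: "\<And>S. finite (NN - S)" by simp
    have AL: "\<And>S. NN - S \<subseteq> {..<length xs}" using len by auto
    show ?thesis
      by (intro sum.cong refl) (simp only: Psi_nths[OF fA AL] sgn_pow_plus sgn_pow_sum prod.case_distrib)
  qed
  finally show ?thesis by (simp only: sum.distrib)
qed

lemma E1:
  "W (Suc p) q (\<lambda>ys zs. Phi (ce_diff br rho eta ys) zs) xs
   = (\<Sum>T\<in>Sub NN (Suc p). \<Sum>t\<in>T. sgn_pow (\<Sum>T + Suc p * p div 2) (sgn_pow (rk T t)
        (Phi (rho (xs ! t) (eta (nths xs (T - {t})))) (nths xs (NN - T)))))
   + (\<Sum>T\<in>Sub NN (Suc p). \<Sum>(s, t)\<in>{(s, t). s \<in> T \<and> t \<in> T \<and> s < t}.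
        sgn_pow (\<Sum>T + Suc p * p div 2) (sgn_pow (rk T s + rk T t)
          (Phi (eta (br (xs ! s) (xs ! t) # nths xs (T - {s, t}))) (nths xs (NN - T)))))"
proof -
  have "W (Suc p) q (\<lambda>ys zs. Phi (ce_diff br rho eta ys) zs) xs
     = (\<Sum>T\<in>Sub NN (Suc p). sgn_pow (\<Sum>T + Suc p * p div 2) (Phi (ce_diff br rho eta (nths xs T)) (nths xs (NN - T))))"
    unfolding W_def by simp
  also have "\<dots> = (\<Sum>T\<in>Sub NN (Suc p). (\<Sum>t\<in>T. sgn_pow (\<Sum>T + Suc p * p div 2) (sgn_pow (rk T t)
        (Phi (rho (xs ! t) (eta (nths xs (T - {t})))) (nths xs (NN - T)))))
   + (\<Sum>(s, t)\<in>{(s, t). s \<in> T \<and> t \<in> T \<and> s < t}.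
        sgn_pow (\<Sum>T + Suc p * p div 2) (sgn_pow (rk T s + rk T t)
          (Phi (eta (br (xs ! s) (xs ! t) # nths xs (T - {s, t}))) (nths xs (NN - T))))))"
    by (intro sum.cong refl) (simp only: E1_inner sgn_pow_plus sgn_pow_sum prod.case_distrib)
  finally show ?thesis by (simp only: sum.distrib)
qed

lemma E3:
  "ce_diff br br (W p q (\<lambda>ys zs. Phi (eta ys) zs)) xs
   = (\<Sum>i\<in>{..<Suc (p + q)}. \<Sum>S\<in>Sub ({..<Suc (p + q)} - {i}) p.
       sgn_pow i (sgn_pow ((\<Sum>s\<in>S. rk ({..<Suc (p + q)} - {i}) s) + p * (p - 1) div 2)
         (br (xs ! i) (Phi (eta (nths xs S)) (nths xs ({..<Suc (p + q)} - {i} - S))))))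
   + (\<Sum>(i, j)\<in>{(i, j). i < j \<and> j < Suc (p + q)}. sgn_pow (i + j)
       (if p = 0 then 0 else (\<Sum>S\<in>Sub ({..<Suc (p + q)} - {i, j}) (p - 1).
        sgn_pow ((\<Sum>s\<in>S. rk ({..<Suc (p + q)} - {i, j}) s) + (p - 1) + p * (p - 1) div 2)
          (Phi (eta (br (xs ! i) (xs ! j) # nths xs S)) (nths xs ({..<Suc (p + q)} - {i, j} - S))))))
   + (\<Sum>(i, j)\<in>{(i, j). i < j \<and> j < Suc (p + q)}. sgn_pow (i + j)
       (\<Sum>S\<in>Sub ({..<Suc (p + q)} - {i, j}) p.
        sgn_pow ((\<Sum>s\<in>S. rk ({..<Suc (p + q)} - {i, j}) s) + p + p * (p - 1) div 2)
          (Phi (eta (nths xs S)) (br (xs ! i) (xs ! j) # nths xs ({..<Suc (p + q)} - {i, j} - S)))))"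
proof -
  have 1: "(\<Sum>i<length xs. sgn_pow i (br (xs ! i) (W p q (\<lambda>ys zs. Phi (eta ys) zs) (del_nth i xs))))
     = (\<Sum>i\<in>{..<Suc (p + q)}. \<Sum>S\<in>Sub ({..<Suc (p + q)} - {i}) p.
       sgn_pow i (sgn_pow ((\<Sum>s\<in>S. rk ({..<Suc (p + q)} - {i}) s) + p * (p - 1) div 2)
         (br (xs ! i) (Phi (eta (nths xs S)) (nths xs ({..<Suc (p + q)} - {i} - S))))))"
    unfolding len
    by (intro sum.cong refl) (simp only: W_del[OF len] lessThan_iff br_sum br_sgn sgn_pow_sum)
  have 2: "(\<Sum>(i, j)\<in>{(i, j). i < j \<and> j < length xs}. sgn_pow (i + j)
          (W p q (\<lambda>ys zs. Phi (eta ys) zs) (br (xs ! i) (xs ! j) # del_nth i (del_nth j xs))))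
     = (\<Sum>(i, j)\<in>{(i, j). i < j \<and> j < Suc (p + q)}. sgn_pow (i + j)
       (if p = 0 then 0 else (\<Sum>S\<in>Sub ({..<Suc (p + q)} - {i, j}) (p - 1).
        sgn_pow ((\<Sum>s\<in>S. rk ({..<Suc (p + q)} - {i, j}) s) + (p - 1) + p * (p - 1) div 2)
          (Phi (eta (br (xs ! i) (xs ! j) # nths xs S)) (nths xs ({..<Suc (p + q)} - {i, j} - S)))))
      + sgn_pow (i + j)
       (\<Sum>S\<in>Sub ({..<Suc (p + q)} - {i, j}) p.
        sgn_pow ((\<Sum>s\<in>S. rk ({..<Suc (p + q)} - {i, j}) s) + p + p * (p - 1) div 2)
          (Phi (eta (nths xs S)) (br (xs ! i) (xs ! j) # nths xs ({..<Suc (p + q)} - {i, j} - S)))))"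
    unfolding len
    by (intro sum.cong refl) (auto simp only: W_cons[OF len] mem_Collect_eq split: prod.splits intro!: sgn_pow_plus)
  show ?thesis
    unfolding ce_diff_def 1 2 by (simp only: sum.distrib add.assoc split_def)
qed

lemma par1: "(X'::nat) = t + X \<Longrightarrow> c1 = c + p \<Longrightarrow> r + a = t \<Longrightarrow> even (X' + c1 + a) = even (p + (X + c) + r)"
  by presburger
lemma par2: "(X'::nat) = s + t + X \<Longrightarrow> c1 = c + p \<Longrightarrow> R + (bs + bt) = X \<Longrightarrow> us + bs + 1 = p
   \<Longrightarrow> ut + bt + 1 = p \<Longrightarrow> even (X' + c1 + (us + (ut + 1))) = even (s + t + (R + (p - 1) + c))"
  by presburger
lemma par3: "(r::nat) + a = i \<Longrightarrow> R + b = X \<Longrightarrow> a + b = p \<Longrightarrow> even (p + (X + c) + r) = even (i + (R + c))"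
  by presburger
lemma par4: "(ri::nat) + ai = i \<Longrightarrow> rj + aj = j \<Longrightarrow> R + (bi + bj) = X \<Longrightarrow> ai + bi = p \<Longrightarrow> aj + bj = p
   \<Longrightarrow> even (p + (X + c) + (ri + rj)) = even (i + j + (R + p + c))"
  by presburger

lemma M3:
  "(\<Sum>S\<in>Sub {..<Suc (p + q)} p. \<Sum>i\<in>{..<Suc (p + q)} - S. sgn_pow (p + (\<Sum>S + p * (p - 1) div 2))
      (sgn_pow (rk ({..<Suc (p + q)} - S) i) (g i S ({..<Suc (p + q)} - S - {i}))))
   = (\<Sum>i\<in>{..<Suc (p + q)}. \<Sum>S\<in>Sub ({..<Suc (p + q)} - {i}) p.
       sgn_pow i (sgn_pow ((\<Sum>s\<in>S. rk ({..<Suc (p + q)} - {i}) s) + p * (p - 1) div 2)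
         (g i S ({..<Suc (p + q)} - {i} - S))))"
proof -
  define N where "N = {..<Suc (p + q)}"
  define c where "c = p * (p - 1) div 2"
  have "(\<Sum>S\<in>Sub N p. \<Sum>i\<in>N - S. sgn_pow (p + (\<Sum>S + c)) (sgn_pow (rk (N - S) i) (g i S (N - S - {i}))))
      = (\<Sum>S\<in>Sub N p. \<Sum>i\<in>{i\<in>N. i \<notin> S}. sgn_pow (p + (\<Sum>S + c)) (sgn_pow (rk (N - S) i) (g i S (N - S - {i}))))"
    by (intro sum.cong refl) auto
  also have "\<dots> = (\<Sum>i\<in>N. \<Sum>S\<in>{S\<in>Sub N p. i \<notin> S}. sgn_pow (p + (\<Sum>S + c)) (sgn_pow (rk (N - S) i) (g i S (N - S - {i}))))"
    by (rule sum.swap_restrict) (simp_all add: N_def)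
  also have "\<dots> = (\<Sum>i\<in>N. \<Sum>S\<in>Sub (N - {i}) p.
       sgn_pow i (sgn_pow ((\<Sum>s\<in>S. rk (N - {i}) s) + c) (g i S (N - {i} - S))))"
  proof (intro sum.cong refl)
    fix i assume i: "i \<in> N"
    show "{S\<in>Sub N p. i \<notin> S} = Sub (N - {i}) p" by (auto simp: Sub_def)
    fix S assume S: "S \<in> Sub (N - {i}) p"
    then have SN: "S \<subseteq> N - {i}" and cS: "card S = p" by (auto simp: Sub_def)
    have fS: "finite S" using SN finite_subset unfolding N_def by blast
    have h1: "rk (N - S) i + card {x\<in>S. x < i} = i" unfolding N_def
      by (rule rk_minus) (use i N_def in auto)
    have h2: "(\<Sum>s\<in>S. rk (N - {i}) s) + (\<Sum>x\<in>{i}. card {s\<in>S. x < s}) = \<Sum>S" unfolding N_def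
      by (rule sum_rk_minus) (use fS SN N_def in auto)
    have h3: "card {s\<in>S. s < i} + card {s\<in>S. i < s} = p"
      using card_lt_gt[OF fS] SN cS by auto
    have "even (p + (\<Sum>S + c) + rk (N - S) i) = even (i + ((\<Sum>s\<in>S. rk (N - {i}) s) + c))"
      by (rule par3[OF h1 _ h3]) (use h2 in simp)
    moreover have "N - S - {i} = N - {i} - S" by auto
    ultimately show "sgn_pow (p + (\<Sum>S + c)) (sgn_pow (rk (N - S) i) (g i S (N - S - {i})))
      = sgn_pow i (sgn_pow ((\<Sum>s\<in>S. rk (N - {i}) s) + c) (g i S (N - {i} - S)))"
      by (simp only: sgn_pow_add_exp[symmetric]) (rule sgn_pow_parity)
  qed
  finally show ?thesis unfolding N_def c_def .
qed

lemma M1: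
  "(\<Sum>T\<in>Sub {..<Suc (p + q)} (Suc p). \<Sum>t\<in>T. sgn_pow (\<Sum>T + Suc p * p div 2)
      (sgn_pow (rk T t) (g t (T - {t}) ({..<Suc (p + q)} - T))))
   = (\<Sum>S\<in>Sub {..<Suc (p + q)} p. \<Sum>i\<in>{..<Suc (p + q)} - S. sgn_pow (p + (\<Sum>S + p * (p - 1) div 2))
      (sgn_pow (rk ({..<Suc (p + q)} - S) i) (g i S ({..<Suc (p + q)} - S - {i}))))"
proof -
  define N where "N = {..<Suc (p + q)}"
  define c where "c = p * (p - 1) div 2"
  have fN: "finite N" unfolding N_def by simp
  have fS: "\<And>S k. S \<in> Sub N k \<Longrightarrow> finite S" using Sub_finite[OF fN] by blast
  have "(\<Sum>S\<in>Sub N p. \<Sum>i\<in>N - S. sgn_pow (p + (\<Sum>S + c)) (sgn_pow (rk (N - S) i) (g i S (N - S - {i}))))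
     = (\<Sum>(S, i)\<in>(SIGMA S:Sub N p. N - S). sgn_pow (p + (\<Sum>S + c)) (sgn_pow (rk (N - S) i) (g i S (N - S - {i}))))"
    by (rule sum.Sigma) (simp_all add: fN)
  also have "\<dots> = (\<Sum>(T, t)\<in>(SIGMA T:Sub N (Suc p). T). sgn_pow (\<Sum>T + Suc p * p div 2)
      (sgn_pow (rk T t) (g t (T - {t}) (N - T))))"
  proof (rule sum.reindex_bij_witness[where j="\<lambda>(S, i). (insert i S, i)" and i="\<lambda>(T, t). (T - {t}, t)"])
    fix a assume a: "a \<in> (SIGMA S:Sub N p. N - S)"
    then obtain S i where ai: "a = (S, i)" "S \<in> Sub N p" "i \<in> N" "i \<notin> S" by auto
    have fS': "finite S" using fS ai(2) by blast
    show "(case case a of (S, i) \<Rightarrow> (insert i S, i) of (T, t) \<Rightarrow> (T - {t}, t)) = a" using ai by auto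
    show "(case a of (S, i) \<Rightarrow> (insert i S, i)) \<in> (SIGMA T:Sub N (Suc p). T)"
      using ai fS' by (auto simp: Sub_def)
    have h1: "\<Sum>(insert i S) = i + \<Sum>S" using fS' ai by simp
    have h2: "Suc p * p div 2 = c + p" unfolding c_def by (rule tri_div)
    have h3: "rk (N - S) i + card {x\<in>S. x < i} = i" unfolding N_def
      by (rule rk_minus) (use ai N_def in auto)
    have h4: "rk (insert i S) i = card {x\<in>S. x < i}" unfolding rk_def
      by (rule arg_cong[where f=card]) auto
    have e1: "insert i S - {i} = S" "N - insert i S = N - S - {i}" using ai by auto
    show "(case case a of (S, i) \<Rightarrow> (insert i S, i) of (T, t) \<Rightarrow>
          sgn_pow (\<Sum>T + Suc p * p div 2) (sgn_pow (rk T t) (g t (T - {t}) (N - T))))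
        = (case a of (S, i) \<Rightarrow> sgn_pow (p + (\<Sum>S + c)) (sgn_pow (rk (N - S) i) (g i S (N - S - {i}))))"
      unfolding ai(1) prod.case e1 sgn_pow_add_exp[symmetric] h4
      by (rule sgn_pow_parity, rule par1[OF h1 h2 h3])
  next
    fix b assume b: "b \<in> (SIGMA T:Sub N (Suc p). T)"
    then obtain T t where bi: "b = (T, t)" "T \<in> Sub N (Suc p)" "t \<in> T" by auto
    have fT: "finite T" using fS bi(2) by blast
    show "(case case b of (T, t) \<Rightarrow> (T - {t}, t) of (S, i) \<Rightarrow> (insert i S, i)) = b" using bi by auto
    show "(case b of (T, t) \<Rightarrow> (T - {t}, t)) \<in> (SIGMA S:Sub N p. N - S)"
      using bi fT by (auto simp: Sub_def)
  qed
  also have "\<dots> = (\<Sum>T\<in>Sub N (Suc p). \<Sum>t\<in>T. sgn_pow (\<Sum>T + Suc p * p div 2)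
      (sgn_pow (rk T t) (g t (T - {t}) (N - T))))"
    by (rule sum.Sigma[symmetric]) (auto simp: fN fS)
  finally show ?thesis unfolding N_def c_def by (rule sym)
qed

lemma M4:
  "(\<Sum>S\<in>Sub {..<Suc (p + q)} p. \<Sum>(i, j)\<in>{(i, j). i \<in> {..<Suc (p + q)} - S \<and> j \<in> {..<Suc (p + q)} - S \<and> i < j}.
        sgn_pow (p + (\<Sum>S + p * (p - 1) div 2)) (sgn_pow (rk ({..<Suc (p + q)} - S) i + rk ({..<Suc (p + q)} - S) j)
          (g i j S ({..<Suc (p + q)} - S - {i, j}))))
   = (\<Sum>(i, j)\<in>{(i, j). i < j \<and> j < Suc (p + q)}. sgn_pow (i + j)
       (\<Sum>S\<in>Sub ({..<Suc (p + q)} - {i, j}) p.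
        sgn_pow ((\<Sum>s\<in>S. rk ({..<Suc (p + q)} - {i, j}) s) + p + p * (p - 1) div 2)
          (g i j S ({..<Suc (p + q)} - {i, j} - S))))"
proof -
  define N where "N = {..<Suc (p + q)}"
  define c where "c = p * (p - 1) div 2"
  have fN: "finite N" unfolding N_def by simp
  have fS: "\<And>S k. S \<in> Sub N k \<Longrightarrow> finite S" using Sub_finite[OF fN] by blast
  have fP: "finite {(i, j). i \<in> N - S \<and> j \<in> N - S \<and> i < j}" for S
    by (rule finite_subset[of _ "N \<times> N"]) (auto simp: fN)
  have fP2: "finite {(i, j). i < j \<and> j < Suc (p + q)}"
    by (rule finite_subset[of _ "N \<times> N"]) (auto simp: fN N_def)
  have "(\<Sum>S\<in>Sub N p. \<Sum>(i, j)\<in>{(i, j). i \<in> N - S \<and> j \<in> N - S \<and> i < j}.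
        sgn_pow (p + (\<Sum>S + c)) (sgn_pow (rk (N - S) i + rk (N - S) j) (g i j S (N - S - {i, j}))))
     = (\<Sum>(S, ij)\<in>(SIGMA S:Sub N p. {(i, j). i \<in> N - S \<and> j \<in> N - S \<and> i < j}). case ij of (i, j) \<Rightarrow>
        sgn_pow (p + (\<Sum>S + c)) (sgn_pow (rk (N - S) i + rk (N - S) j) (g i j S (N - S - {i, j}))))"
    by (rule sum.Sigma[OF finite_Sub[OF fN]]) (blast intro: fP)
  also have "\<dots> = (\<Sum>(ij, S)\<in>(SIGMA ij:{(i, j). i < j \<and> j < Suc (p + q)}. Sub (N - {fst ij, snd ij}) p).
       case ij of (i, j) \<Rightarrow> sgn_pow (i + j) (sgn_pow ((\<Sum>s\<in>S. rk (N - {i, j}) s) + p + c) (g i j S (N - {i, j} - S))))"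
  proof (rule sum.reindex_bij_witness[where j="\<lambda>(S, ij). (ij, S)" and i="\<lambda>(ij, S). (S, ij)"])
    fix a assume a: "a \<in> (SIGMA S:Sub N p. {(i, j). i \<in> N - S \<and> j \<in> N - S \<and> i < j})"
    then obtain S i j where ai: "a = (S, (i, j))" "S \<in> Sub N p" "i \<in> N" "j \<in> N" "i \<notin> S" "j \<notin> S" "i < j" by auto
    have fS': "finite S" using fS ai(2) by blast
    show "(case case a of (S, ij) \<Rightarrow> (ij, S) of (ij, S) \<Rightarrow> (S, ij)) = a" using ai by auto
    show "(case a of (S, ij) \<Rightarrow> (ij, S)) \<in> (SIGMA ij:{(i, j). i < j \<and> j < Suc (p + q)}. Sub (N - {fst ij, snd ij}) p)"
      using ai by (auto simp: Sub_def N_def)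
    have SN: "S \<subseteq> N - {i, j}" using ai by (auto simp: Sub_def)
    have cS: "card S = p" using ai by (simp add: Sub_def)
    have h1: "rk (N - S) i + card {x\<in>S. x < i} = i" unfolding N_def
      by (rule rk_minus) (use ai N_def in auto)
    have h2: "rk (N - S) j + card {x\<in>S. x < j} = j" unfolding N_def
      by (rule rk_minus) (use ai N_def in auto)
    have h3: "(\<Sum>s\<in>S. rk (N - {i, j}) s) + (\<Sum>x\<in>{i, j}. card {s\<in>S. x < s}) = \<Sum>S" unfolding N_def
      by (rule sum_rk_minus) (use fS' SN N_def in auto)
    have h3': "(\<Sum>x\<in>{i, j}. card {s\<in>S. x < s}) = card {s\<in>S. i < s} + card {s\<in>S. j < s}"
      using ai by simp
    have h4: "card {s\<in>S. s < i} + card {s\<in>S. i < s} = p" using card_lt_gt[OF fS'] ai cS by auto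
    have h5: "card {s\<in>S. s < j} + card {s\<in>S. j < s} = p" using card_lt_gt[OF fS'] ai cS by auto
    have e1: "N - S - {i, j} = N - {i, j} - S" by auto
    show "(case case a of (S, ij) \<Rightarrow> (ij, S) of (ij, S) \<Rightarrow> case ij of (i, j) \<Rightarrow>
          sgn_pow (i + j) (sgn_pow ((\<Sum>s\<in>S. rk (N - {i, j}) s) + p + c) (g i j S (N - {i, j} - S))))
        = (case a of (S, ij) \<Rightarrow> case ij of (i, j) \<Rightarrow>
          sgn_pow (p + (\<Sum>S + c)) (sgn_pow (rk (N - S) i + rk (N - S) j) (g i j S (N - S - {i, j}))))"
      unfolding ai(1) prod.case e1 sgn_pow_add_exp[symmetric]
      by (rule sgn_pow_parity, rule par4[OF h1 h2 _ h4 h5, symmetric]) (use h3 h3' in simp)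
  next
    fix b assume b: "b \<in> (SIGMA ij:{(i, j). i < j \<and> j < Suc (p + q)}. Sub (N - {fst ij, snd ij}) p)"
    then obtain S i j where bi: "b = ((i, j), S)" "S \<in> Sub (N - {i, j}) p" "i < j" "j < Suc (p + q)" by auto
    show "(case case b of (ij, S) \<Rightarrow> (S, ij) of (S, ij) \<Rightarrow> (ij, S)) = b" using bi by auto
    show "(case b of (ij, S) \<Rightarrow> (S, ij)) \<in> (SIGMA S:Sub N p. {(i, j). i \<in> N - S \<and> j \<in> N - S \<and> i < j})"
      using bi by (auto simp: Sub_def N_def)
  qed
  also have "\<dots> = (\<Sum>ij\<in>{(i, j). i < j \<and> j < Suc (p + q)}. \<Sum>S\<in>Sub (N - {fst ij, snd ij}) p.
       case ij of (i, j) \<Rightarrow> sgn_pow (i + j) (sgn_pow ((\<Sum>s\<in>S. rk (N - {i, j}) s) + p + c) (g i j S (N - {i, j} - S))))"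
    by (rule sum.Sigma[symmetric]) (simp_all add: fP2 fN)
  also have "\<dots> = (\<Sum>(i, j)\<in>{(i, j). i < j \<and> j < Suc (p + q)}. sgn_pow (i + j)
       (\<Sum>S\<in>Sub (N - {i, j}) p. sgn_pow ((\<Sum>s\<in>S. rk (N - {i, j}) s) + p + c) (g i j S (N - {i, j} - S))))"
    by (intro sum.cong refl) (auto simp: sgn_pow_sum)
  finally show ?thesis unfolding N_def c_def .
qed

lemma M2:
  "(\<Sum>T\<in>Sub {..<Suc (p + q)} (Suc p). \<Sum>(s, t)\<in>{(s, t). s \<in> T \<and> t \<in> T \<and> s < t}.
        sgn_pow (\<Sum>T + Suc p * p div 2) (sgn_pow (rk T s + rk T t) (g s t (T - {s, t}) ({..<Suc (p + q)} - T))))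
   = (\<Sum>(i, j)\<in>{(i, j). i < j \<and> j < Suc (p + q)}. sgn_pow (i + j)
       (if p = 0 then 0 else (\<Sum>S\<in>Sub ({..<Suc (p + q)} - {i, j}) (p - 1).
        sgn_pow ((\<Sum>s\<in>S. rk ({..<Suc (p + q)} - {i, j}) s) + (p - 1) + p * (p - 1) div 2)
          (g i j S ({..<Suc (p + q)} - {i, j} - S)))))"
proof (cases "p = 0")
  case True
  have "{(s, t). s \<in> T \<and> t \<in> T \<and> s < t} = {}" if T: "T \<in> Sub {..<Suc (p + q)} (Suc p)" for T
  proof -
    have "card T = 1" using T True by (simp add: Sub_def)
    then obtain a where "T = {a}" using card_1_singletonE by blast
    then show ?thesis by auto
  qed
  then show ?thesis using True by (force intro!: sum.neutral)
next
  case False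
  define N where "N = {..<Suc (p + q)}"
  define c where "c = p * (p - 1) div 2"
  have fN: "finite N" unfolding N_def by simp
  have fS: "\<And>S k. S \<in> Sub N k \<Longrightarrow> finite S" using Sub_finite[OF fN] by blast
  have fP: "finite {(s, t). s \<in> T \<and> t \<in> T \<and> s < t}" if "T \<in> Sub N (Suc p)" for T
    by (rule finite_subset[of _ "T \<times> T"]) (use fS that in auto)
  have fP2: "finite {(i, j). i < j \<and> j < Suc (p + q)}"
    by (rule finite_subset[of _ "N \<times> N"]) (auto simp: fN N_def)
  have "(\<Sum>T\<in>Sub N (Suc p). \<Sum>(s, t)\<in>{(s, t). s \<in> T \<and> t \<in> T \<and> s < t}.
        sgn_pow (\<Sum>T + Suc p * p div 2) (sgn_pow (rk T s + rk T t) (g s t (T - {s, t}) (N - T))))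
     = (\<Sum>(T, st)\<in>(SIGMA T:Sub N (Suc p). {(s, t). s \<in> T \<and> t \<in> T \<and> s < t}). case st of (s, t) \<Rightarrow>
        sgn_pow (\<Sum>T + Suc p * p div 2) (sgn_pow (rk T s + rk T t) (g s t (T - {s, t}) (N - T))))"
    by (rule sum.Sigma[OF finite_Sub[OF fN]]) (blast intro: fP)
  also have "\<dots> = (\<Sum>(ij, S)\<in>(SIGMA ij:{(i, j). i < j \<and> j < Suc (p + q)}. Sub (N - {fst ij, snd ij}) (p - 1)).
       case ij of (i, j) \<Rightarrow> sgn_pow (i + j) (sgn_pow ((\<Sum>s\<in>S. rk (N - {i, j}) s) + (p - 1) + c) (g i j S (N - {i, j} - S))))"
  proof (rule sum.reindex_bij_witness[where j="\<lambda>(T, st). (st, T - {fst st, snd st})"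
        and i="\<lambda>(ij, S). (insert (fst ij) (insert (snd ij) S), ij)"])
    fix a assume a: "a \<in> (SIGMA T:Sub N (Suc p). {(s, t). s \<in> T \<and> t \<in> T \<and> s < t})"
    then obtain T s t where ai: "a = (T, (s, t))" "T \<in> Sub N (Suc p)" "s \<in> T" "t \<in> T" "s < t" by auto
    have fT: "finite T" using fS ai(2) by blast
    define S where "S = T - {s, t}"
    have eT: "T = insert s (insert t S)" using ai unfolding S_def by auto
    have sS: "s \<notin> S" "t \<notin> S" unfolding S_def by auto
    have fS': "finite S" unfolding S_def using fT by simp
    have TN: "T \<subseteq> N" and cT: "card T = Suc p" using ai by (auto simp: Sub_def)
    have cS: "card S = p - 1" unfolding S_def using fT ai cT by (simp add: card_Diff_subset)
    show "(case case a of (T, st) \<Rightarrow> (st, T - {fst st, snd st}) of (ij, S) \<Rightarrow> (insert (fst ij) (insert (snd ij) S), ij)) = a"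
      using ai by auto
    show "(case a of (T, st) \<Rightarrow> (st, T - {fst st, snd st}))
        \<in> (SIGMA ij:{(i, j). i < j \<and> j < Suc (p + q)}. Sub (N - {fst ij, snd ij}) (p - 1))"
      using ai TN cS unfolding S_def by (auto simp: Sub_def N_def)
    have SN: "S \<subseteq> N - {s, t}" using TN unfolding S_def by auto
    have h1: "\<Sum>T = s + t + \<Sum>S" unfolding eT using fS' sS ai(5) by simp
    have h2: "Suc p * p div 2 = c + p" unfolding c_def by (rule tri_div)
    have h3: "(\<Sum>x\<in>S. rk (N - {s, t}) x) + (\<Sum>x\<in>{s, t}. card {y\<in>S. x < y}) = \<Sum>S" unfolding N_def
      by (rule sum_rk_minus) (use fS' SN N_def in auto)
    have h3': "(\<Sum>x\<in>{s, t}. card {y\<in>S. x < y}) = card {y\<in>S. s < y} + card {y\<in>S. t < y}"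
      using ai by simp
    have h4: "card {y\<in>S. y < s} + card {y\<in>S. s < y} + 1 = p" using card_lt_gt[OF fS' sS(1)] cS False by simp
    have h5: "card {y\<in>S. y < t} + card {y\<in>S. t < y} + 1 = p" using card_lt_gt[OF fS' sS(2)] cS False by simp
    have r1: "rk T s = card {y\<in>S. y < s}" unfolding rk_def eT
      by (rule arg_cong[where f=card]) (use ai in auto)
    have r2: "rk T t = card {y\<in>S. y < t} + 1"
    proof -
      have "{k\<in>T. k < t} = insert s {y\<in>S. y < t}" unfolding eT using ai by auto
      then show ?thesis unfolding rk_def using fS' sS by simp
    qed
    have e1: "N - T = N - {s, t} - S" unfolding eT by auto
    show "(case case a of (T, st) \<Rightarrow> (st, T - {fst st, snd st}) of (ij, S) \<Rightarrow> case ij of (i, j) \<Rightarrow>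
          sgn_pow (i + j) (sgn_pow ((\<Sum>s\<in>S. rk (N - {i, j}) s) + (p - 1) + c) (g i j S (N - {i, j} - S))))
        = (case a of (T, st) \<Rightarrow> case st of (s, t) \<Rightarrow>
          sgn_pow (\<Sum>T + Suc p * p div 2) (sgn_pow (rk T s + rk T t) (g s t (T - {s, t}) (N - T))))"
      unfolding ai(1) prod.case fst_conv snd_conv S_def[symmetric] e1 sgn_pow_add_exp[symmetric] r1 r2
      by (rule sgn_pow_parity, rule par2[OF h1 h2 _ h4 h5, symmetric]) (use h3 h3' in simp)
  next
    fix b assume b: "b \<in> (SIGMA ij:{(i, j). i < j \<and> j < Suc (p + q)}. Sub (N - {fst ij, snd ij}) (p - 1))"
    then obtain S i j where bi: "b = ((i, j), S)" "S \<in> Sub (N - {i, j}) (p - 1)" "i < j" "j < Suc (p + q)" by auto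
    have fS': "finite S" using bi(2) Sub_finite[of "N - {i, j}"] fN by blast
    have SN: "S \<subseteq> N - {i, j}" and cS: "card S = p - 1" using bi by (auto simp: Sub_def)
    show "(case case b of (ij, S) \<Rightarrow> (insert (fst ij) (insert (snd ij) S), ij) of (T, st) \<Rightarrow> (st, T - {fst st, snd st})) = b"
      using bi SN by auto
    have ni: "i \<notin> insert j S" using SN bi by auto
    have nj: "j \<notin> S" using SN by auto
    have "card (insert i (insert j S)) = Suc p" using fS' ni nj cS False by simp
    then show "(case b of (ij, S) \<Rightarrow> (insert (fst ij) (insert (snd ij) S), ij))
        \<in> (SIGMA T:Sub N (Suc p). {(s, t). s \<in> T \<and> t \<in> T \<and> s < t})"
      using bi SN by (auto simp: Sub_def N_def)
  qed
  also have "\<dots> = (\<Sum>ij\<in>{(i, j). i < j \<and> j < Suc (p + q)}. \<Sum>S\<in>Sub (N - {fst ij, snd ij}) (p - 1).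
       case ij of (i, j) \<Rightarrow> sgn_pow (i + j) (sgn_pow ((\<Sum>s\<in>S. rk (N - {i, j}) s) + (p - 1) + c) (g i j S (N - {i, j} - S))))"
    by (rule sum.Sigma[symmetric]) (simp_all add: fP2 fN)
  also have "\<dots> = (\<Sum>(i, j)\<in>{(i, j). i < j \<and> j < Suc (p + q)}. sgn_pow (i + j)
       (if p = 0 then 0 else (\<Sum>S\<in>Sub (N - {i, j}) (p - 1). sgn_pow ((\<Sum>s\<in>S. rk (N - {i, j}) s) + (p - 1) + c) (g i j S (N - {i, j} - S)))))"
    using False by (intro sum.cong refl) (auto simp: sgn_pow_sum)
  finally show ?thesis unfolding N_def c_def .
qed

lemma main:
  "W (Suc p) q (\<lambda>ys zs. Phi (ce_diff br rho eta ys) zs) xs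
     + sgn_pow p (W p (Suc q) (\<lambda>ys zs. Psi (eta ys) zs) xs)
   = ce_diff br br (W p q (\<lambda>ys zs. Phi (eta ys) zs)) xs"
proof -
  note m1 = M1[where g="\<lambda>t S Sc. Phi (rho (xs ! t) (eta (nths xs S))) (nths xs Sc)"]
  note m2 = M2[where g="\<lambda>s t S Sc. Phi (eta (br (xs ! s) (xs ! t) # nths xs S)) (nths xs Sc)"]
  note m3 = M3[where g="\<lambda>i S Sc. br (xs ! i) (Phi (eta (nths xs S)) (nths xs Sc))"]
  note m4 = M4[where g="\<lambda>i j S Sc. Phi (eta (nths xs S)) (br (xs ! i) (xs ! j) # nths xs Sc)"]
  show ?thesis
    unfolding E1 E2 E3 sgn_pow_diff sum_subtractf
    unfolding m1 m2 m3 m4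
    by (simp add: algebra_simps)
qed

end

end


lemma W_cong:
  assumes len: "length xs = p + q"
    and FG: "\<And>ys zs. length ys = p \<Longrightarrow> length zs = q \<Longrightarrow> F ys zs = G ys zs"
  shows "W p q F xs = W p q G xs"
  unfolding W_def
proof (intro sum.cong refl arg_cong[where f="sgn_pow _"] FG)
  fix S assume S: "S \<in> Sub {..<p + q} p"
  then have SN: "S \<subseteq> {..<length xs}" and cS: "card S = p" using len by (auto simp: Sub_def)
  show "length (nths xs S) = p" using length_nths_sub[OF SN] cS by simp
  have "card ({..<p + q} - S) = q" using card_Diff_subset[of S "{..<p + q}"] SN cS len
    by (simp add: finite_subset)
  then show "length (nths xs ({..<p + q} - S)) = q"
    using length_nths_sub[of "{..<p + q} - S" xs] len by auto
qed

lemma W_zero: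
  assumes "length xs = r"
  shows "W 0 r F xs = F [] xs"
proof -
  have "Sub {..<r} 0 = {{}}"
  proof
    show "Sub {..<r} 0 \<subseteq> {{}}"
    proof
      fix S assume "S \<in> Sub {..<r} 0"
      then have "S \<subseteq> {..<r}" "card S = 0" by (auto simp: Sub_def)
      then show "S \<in> {{}}" using finite_subset by fastforce
    qed
  qed (auto simp: Sub_def)
  then show ?thesis unfolding W_def using assms by simp
qed

theorem proposition1p15:
  fixes sc :: "'k::field_char_0 \<Rightarrow> 'g::ab_group_add \<Rightarrow> 'g"
    and br :: "'g \<Rightarrow> 'g \<Rightarrow> 'g"
    and scv :: "'k \<Rightarrow> 'v::ab_group_add \<Rightarrow> 'v"
    and V :: "nat \<Rightarrow> 'v set"
    and act :: "nat \<Rightarrow> 'g \<Rightarrow> 'v \<Rightarrow> 'v"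
    and d :: "nat \<Rightarrow> 'v \<Rightarrow> 'v"
    and alpha :: "nat \<Rightarrow> 'v \<Rightarrow> 'g list \<Rightarrow> 'g"
    and u :: nat
  assumes "lie_algebra sc br"
    and "finite_dim sc"
    and "dg_module sc br scv V act d"
    and "u = min (topdeg V) (vector_space.dim sc (UNIV :: 'g set))"
    and "lp_family sc scv V u alpha"
  shows "dg_LP_module sc br scv V act d alpha \<longleftrightarrow>
    (\<forall>k\<le>u. \<forall>xs. \<forall>v\<in>V k. length xs = Suc k \<longrightarrow>
       alpha (Suc k) (d k v) xs =
         (\<Sum>i<Suc k. sgn_pow i (br (xs ! i) (alpha k v (del_nth i xs))
                                 - alpha k (act k (xs ! i) v) (del_nth i xs)))
         + (\<Sum>(i, j)\<in>{(i, j). i < j \<and> j < Suc k}.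
              sgn_pow (i + j) (alpha k v (br (xs ! i) (xs ! j) # del_nth i (del_nth j xs)))))"
proof -
  note la = assms(1) and dg = assms(3) and lpf = assms(5)
  have vs: "vector_space sc" using la by (simp add: lie_algebra_def)
  have sc1: "\<And>y. sc 1 y = y" using vector_space.vector_space_assms(4)[OF vs] .
  have br_add: "\<And>x y z. br x (y + z) = br x y + br x z"
    using la sc1 unfolding lie_algebra_def by metis
  have br0: "\<And>x. br x 0 = 0" using br_add by (metis add_cancel_right_right)
  have lm: "\<And>k. lie_module sc br scv (V k) (act k)" using dg by (simp add: dg_module_def)
  have vsv: "vector_space scv" using lm[of 0] by (simp add: lie_module_def)
  have modv: "module scv" using vsv module_iff_vector_space by blast
  have scv1: "\<And>v. scv 1 v = v" using vector_space.vector_space_assms(4)[OF vsv] .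
  have sub: "\<And>k. module.subspace scv (V k)" using lm by (simp add: lie_module_def)
  have M0: "\<And>k. 0 \<in> V k" using module.subspace_0[OF modv sub] .
  have Madd: "\<And>k v w. v \<in> V k \<Longrightarrow> w \<in> V k \<Longrightarrow> v + w \<in> V k"
    using module.subspace_add[OF modv sub] .
  have Mneg: "\<And>k v. v \<in> V k \<Longrightarrow> - v \<in> V k"
    using module.subspace_neg[OF modv sub] .
  have Mrho: "\<And>k x v. v \<in> V k \<Longrightarrow> act k x v \<in> V k"
    using lm by (simp add: lie_module_def)
  have Phi_add: "alpha k (v + w) zs = alpha k v zs + alpha k w zs"
    if "v \<in> V k" "w \<in> V k" "length zs = k" for k v w zs
  proof (cases "k \<le> u")
    case True
    then have "alpha k (scv 1 v + w) zs = sc 1 (alpha k v zs) + alpha k w zs"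
      using lpf that unfolding lp_family_def by blast
    then show ?thesis using scv1 sc1 by simp
  next
    case False
    then show ?thesis using lpf unfolding lp_family_def by simp
  qed
  have core: "\<And>k. core br (act k) (alpha k) (V k) k"
    by unfold_locales (auto simp: br_add Phi_add M0 Madd Mneg Mrho)
  have Psi_eq: "core.Psi br (act k) (alpha k) v xs =
         (\<Sum>i<Suc k. sgn_pow i (br (xs ! i) (alpha k v (del_nth i xs))
                                 - alpha k (act k (xs ! i) v) (del_nth i xs)))
         + (\<Sum>(i, j)\<in>{(i, j). i < j \<and> j < Suc k}.
              sgn_pow (i + j) (alpha k v (br (xs ! i) (xs ! j) # del_nth i (del_nth j xs))))"
    if "length xs = Suc k" for k v xs
    unfolding core.Psi_def[OF core] that ..
  show ?thesis (is "?L \<longleftrightarrow> ?R")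
  proof
    assume LP: "dg_LP_module sc br scv V act d alpha"
    show ?R
    proof (intro allI impI ballI)
      fix k :: nat and xs :: "'g list" and v assume k: "k \<le> u" and v: "v \<in> V k" and len: "length xs = Suc k"
      define eta :: "'g list \<Rightarrow> 'v" where "eta = (\<lambda>_. v)"
      have eta_c: "eta \<in> cochains sc scv 0 (V k)"
        unfolding cochains_def alt_map_def eta_def using v by simp
      have l: "length xs = 0 + k + 1" using len by simp
      have A: "lp_ext alpha (Suc 0) k (ce_diff br (act k) eta) xs
          + sgn_pow 0 (lp_ext alpha 0 (Suc k) (\<lambda>ys. d k (eta ys)) xs)
          = ce_diff br br (lp_ext alpha 0 k eta) xs"
        using LP eta_c l unfolding dg_LP_module_def by blast
      have eta_M: "\<And>ys. length ys = 0 \<Longrightarrow> eta ys \<in> V k" using v eta_def by simp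
      have B: "W (Suc 0) k (\<lambda>ys zs. alpha k (ce_diff br (act k) eta ys) zs) xs
          + sgn_pow 0 (W 0 (Suc k) (\<lambda>ys zs. core.Psi br (act k) (alpha k) (eta ys) zs) xs)
          = ce_diff br br (W 0 k (\<lambda>ys zs. alpha k (eta ys) zs)) xs"
        using core.main[OF core, where eta=eta and p=0 and xs=xs, OF eta_M] len by simp
      have lpW: "lp_ext alpha 0 k eta = W 0 k (\<lambda>ys zs. alpha k (eta ys) zs)"
        by (rule ext) (rule lp_ext_W)
      have "W 0 (Suc k) (\<lambda>ys zs. alpha (Suc k) (d k (eta ys)) zs) xs
          = W 0 (Suc k) (\<lambda>ys zs. core.Psi br (act k) (alpha k) (eta ys) zs) xs"
        using A B unfolding lp_ext_W[of alpha "Suc 0"] lp_ext_W[of alpha 0 "Suc k"] lpW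
        by (simp only: sgn_pow_0) (metis add_left_cancel)
      then have "alpha (Suc k) (d k v) xs = core.Psi br (act k) (alpha k) v xs"
        using W_zero[OF len, where F="\<lambda>ys zs. alpha (Suc k) (d k v) zs"]
          W_zero[OF len, where F="\<lambda>ys zs. core.Psi br (act k) (alpha k) v zs"]
        unfolding eta_def by simp
      then show "alpha (Suc k) (d k v) xs =
         (\<Sum>i<Suc k. sgn_pow i (br (xs ! i) (alpha k v (del_nth i xs))
                                 - alpha k (act k (xs ! i) v) (del_nth i xs)))
         + (\<Sum>(i, j)\<in>{(i, j). i < j \<and> j < Suc k}.
              sgn_pow (i + j) (alpha k v (br (xs ! i) (xs ! j) # del_nth i (del_nth j xs))))"
        using Psi_eq[OF len] by simp
    qed
  next
    assume C: "\<forall>k\<le>u. \<forall>xs. \<forall>v\<in>V k. length xs = Suc k \<longrightarrow>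
       alpha (Suc k) (d k v) xs =
         (\<Sum>i<Suc k. sgn_pow i (br (xs ! i) (alpha k v (del_nth i xs))
                                 - alpha k (act k (xs ! i) v) (del_nth i xs)))
         + (\<Sum>(i, j)\<in>{(i, j). i < j \<and> j < Suc k}.
              sgn_pow (i + j) (alpha k v (br (xs ! i) (xs ! j) # del_nth i (del_nth j xs))))"
    have Call: "alpha (Suc k) (d k v) zs = core.Psi br (act k) (alpha k) v zs"
      if "v \<in> V k" "length zs = Suc k" for k v zs
    proof (cases "k \<le> u")
      case True
      then show ?thesis using C that Psi_eq[OF that(2)] by simp
    next
      case False
      have z: "alpha k w ys = 0" "alpha (Suc k) w ys = 0" for w ys
        using lpf False unfolding lp_family_def by auto
      show ?thesis using z Psi_eq[OF that(2)] by (simp add: br0)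
    qed
    show "dg_LP_module sc br scv V act d alpha"
      unfolding dg_LP_module_def
    proof (intro conjI dg allI ballI impI)
      fix p q :: nat and eta :: "'g list \<Rightarrow> 'v" and xs :: "'g list"
      assume eta: "eta \<in> cochains sc scv p (V q)" and len: "length xs = p + q + 1"
      have eta_M: "\<And>ys. length ys = p \<Longrightarrow> eta ys \<in> V q" using eta by (simp add: cochains_def)
      have len': "length xs = Suc (p + q)" using len by simp
      have m: "W (Suc p) q (\<lambda>ys zs. alpha q (ce_diff br (act q) eta ys) zs) xs
          + sgn_pow p (W p (Suc q) (\<lambda>ys zs. core.Psi br (act q) (alpha q) (eta ys) zs) xs)
          = ce_diff br br (W p q (\<lambda>ys zs. alpha q (eta ys) zs)) xs"
        by (rule core.main[OF core eta_M len'])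
      have w: "W p (Suc q) (\<lambda>ys zs. alpha (Suc q) (d q (eta ys)) zs) xs
          = W p (Suc q) (\<lambda>ys zs. core.Psi br (act q) (alpha q) (eta ys) zs) xs"
        by (rule W_cong) (use len eta_M Call in auto)
      have lpW: "lp_ext alpha p q eta = W p q (\<lambda>ys zs. alpha q (eta ys) zs)"
        by (rule ext) (rule lp_ext_W)
      show "lp_ext alpha (Suc p) q (ce_diff br (act q) eta) xs
          + sgn_pow p (lp_ext alpha p (Suc q) (\<lambda>ys. d q (eta ys)) xs)
          = ce_diff br br (lp_ext alpha p q eta) xs"
        unfolding lp_ext_W[of alpha "Suc p"] lp_ext_W[of alpha p "Suc q"] lpW w using m .
    qed
  qed
qed

end
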